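(* Let $(X,\omega)\in\mathcal{R}_1(a,-b_1,\dots,-b_p)$ and let $\sigma$ be a nontrivial automorphism of $(X,\omega)$. Then one of the following holds: (1) $\sigma^*\omega=-\omega$ and $\sigma^2=\mathrm{Id}$ (hyperelliptic automorphism); (2) $\sigma^3=\mathrm{Id}$ and $p\in\{1,2\}$; (3) $\sigma^4=\mathrm{Id}$ and $p=1$.
   Context: $\mathcal{R}_1(a,-b_1,\dots,-b_p)$ (integers $b_j\ge2$, $a=\sum_jb_j$) is the moduli space of pairs $(X,\omega)$ with $X$ a genus one compact Riemann surface and $\omega$ a meromorphic $1$-form with a single zero of order $a$ and labeled poles $q_1,\dots,q_p$ of orders $b_1,\dots,b_p$, each with zero residue. An automorphism here means a biholomorphism $\sigma:X\to X$ fixing each labeled pole and with $\sigma^*\omega$ a constant multiple of $\omega$ (i.e. an automorphism of the projectivized point $(X,[\omega])$). *)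

theory Defs
  imports "HOL-Complex_Analysis.Complex_Analysis"
begin

definition lattice :: "complex \<Rightarrow> complex \<Rightarrow> complex set" where
  "lattice w1 w2 = {of_int m * w1 + of_int n * w2 | m n. True}"

definition lat_cong :: "complex set \<Rightarrow> complex \<Rightarrow> complex \<Rightarrow> bool" where
  "lat_cong L z w \<longleftrightarrow> z - w \<in> L"

text \<open>f (as a function on C) represents a meromorphic 1-form f(z)dz on the torus C/L.\<close>
definition lattice_periodic_meromorphic :: "complex set \<Rightarrow> (complex \<Rightarrow> complex) \<Rightarrow> bool" where
  "lattice_periodic_meromorphic L f \<longleftrightarrow>
     f meromorphic_on UNIV \<and>
     (\<forall>l\<in>L. \<forall>z. eventually (\<lambda>w. f (w + l) = f w) (at z))"

text \<open>A holomorphic map s : C \<rightarrow> C descending to a biholomorphism of the torus C/L.\<close>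
definition torus_automorphism_lift :: "complex set \<Rightarrow> (complex \<Rightarrow> complex) \<Rightarrow> bool" where
  "torus_automorphism_lift L s \<longleftrightarrow>
     s holomorphic_on UNIV \<and>
     (\<forall>l\<in>L. \<forall>z. lat_cong L (s (z + l)) (s z)) \<and>
     (\<forall>w. \<exists>z. lat_cong L (s z) w) \<and>
     (\<forall>z1 z2. lat_cong L (s z1) (s z2) \<longrightarrow> lat_cong L z1 z2)"

text \<open>Pullback of the 1-form f(z)dz by s equals c times f(z)dz (as meromorphic forms).\<close>
definition pullback_eq :: "(complex \<Rightarrow> complex) \<Rightarrow> (complex \<Rightarrow> complex) \<Rightarrow> complex \<Rightarrow> bool" where
  "pullback_eq s f c \<longleftrightarrow>
     (\<forall>z. eventually (\<lambda>w. f (s w) * deriv s w = c * f w) (at z))"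

end

theory Submission
  imports Defs "HOL-Computational_Algebra.Primes"
begin

lemma lattice_iff: "z \<in> lattice w1 w2 \<longleftrightarrow> (\<exists>m n::int. z = of_int m * w1 + of_int n * w2)"
  unfolding lattice_def by auto

lemma lattice_0 [simp]: "0 \<in> lattice w1 w2"
  unfolding lattice_iff by (rule exI[of _ 0], rule exI[of _ 0]) simp

lemma lattice_w1 [simp]: "w1 \<in> lattice w1 w2"
  unfolding lattice_iff by (rule exI[of _ 1], rule exI[of _ 0]) simp

lemma lattice_w2 [simp]: "w2 \<in> lattice w1 w2"
  unfolding lattice_iff by (rule exI[of _ 0], rule exI[of _ 1]) simp

lemma lattice_add [intro]: "x \<in> lattice w1 w2 \<Longrightarrow> y \<in> lattice w1 w2 \<Longrightarrow> x + y \<in> lattice w1 w2"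
proof -
  assume "x \<in> lattice w1 w2" "y \<in> lattice w1 w2"
  then obtain m n m' n' :: int where "x = of_int m * w1 + of_int n * w2" "y = of_int m' * w1 + of_int n' * w2"
    unfolding lattice_iff by blast
  hence "x + y = of_int (m+m') * w1 + of_int (n+n') * w2" by (simp add: algebra_simps)
  thus ?thesis unfolding lattice_iff by blast
qed

lemma lattice_uminus [intro]: "x \<in> lattice w1 w2 \<Longrightarrow> - x \<in> lattice w1 w2"
proof -
  assume "x \<in> lattice w1 w2"
  then obtain m n :: int where "x = of_int m * w1 + of_int n * w2"
    unfolding lattice_iff by blast
  hence "-x = of_int (-m) * w1 + of_int (-n) * w2" by (simp add: algebra_simps)
  thus ?thesis unfolding lattice_iff by blast
qed

lemma lattice_diff [intro]: "x \<in> lattice w1 w2 \<Longrightarrow> y \<in> lattice w1 w2 \<Longrightarrow> x - y \<in> lattice w1 w2"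
  using lattice_add[of x w1 w2 "-y"] lattice_uminus[of y] by simp

lemma lattice_int_mult [intro]: "x \<in> lattice w1 w2 \<Longrightarrow> of_int k * x \<in> lattice w1 w2"
proof -
  assume "x \<in> lattice w1 w2"
  then obtain m n :: int where "x = of_int m * w1 + of_int n * w2"
    unfolding lattice_iff by blast
  hence "of_int k * x = of_int (k*m) * w1 + of_int (k*n) * w2" by (simp add: algebra_simps)
  thus ?thesis unfolding lattice_iff by blast
qed

lemma lattice_comb [intro]: "of_int m * w1 + of_int n * w2 \<in> lattice w1 w2"
  unfolding lattice_iff by blast

lemma lat_cong_refl [simp]: "lat_cong (lattice w1 w2) z z"
  by (simp add: lat_cong_def)

lemma lat_cong_sym: "lat_cong (lattice w1 w2) z w \<Longrightarrow> lat_cong (lattice w1 w2) w z"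
  unfolding lat_cong_def using lattice_uminus by fastforce

lemma lat_cong_trans: "lat_cong (lattice w1 w2) z w \<Longrightarrow> lat_cong (lattice w1 w2) w u \<Longrightarrow> lat_cong (lattice w1 w2) z u"
  unfolding lat_cong_def using lattice_add by fastforce

locale lat =
  fixes w1 w2 :: complex
  assumes nondeg: "Im (w2 / w1) \<noteq> 0"
begin

abbreviation "L \<equiv> lattice w1 w2"
definition "\<tau> = w2 / w1"

lemma w1_nz: "w1 \<noteq> 0" using nondeg by auto
lemma w2_nz: "w2 \<noteq> 0" using nondeg by auto
lemma Im_tau: "Im \<tau> \<noteq> 0" using nondeg by (simp add: \<tau>_def)
lemma comb_eq: "a * w1 + b * w2 = (a + b * \<tau>) * w1"
  using w1_nz by (simp add: \<tau>_def distrib_right)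

lemma real_indep:
  fixes x y :: real
  assumes "of_real x * w1 + of_real y * w2 = 0"
  shows "x = 0 \<and> y = 0"
proof -
  have "(of_real x + of_real y * \<tau>) * w1 = 0"
    using assms comb_eq by metis
  hence e: "of_real x + of_real y * \<tau> = 0" using w1_nz by simp
  hence "Im (of_real x + of_real y * \<tau>) = 0" by simp
  hence "y * Im \<tau> = 0" by simp
  hence "y = 0" using Im_tau by simp
  with e show ?thesis by simp
qed

lemma int_coords_unique:
  fixes m n m' n' :: int
  assumes "of_int m * w1 + of_int n * w2 = of_int m' * w1 + of_int n' * w2"
  shows "m = m' \<and> n = n'"
proof -
  have "of_real (of_int (m - m')) * w1 + of_real (of_int (n - n')) * w2 = 0"
    using assms by (simp add: algebra_simps)
  from real_indep[OF this] show ?thesis by simp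
qed

lemma real_coords: "\<exists>x y::real. z = of_real x * w1 + of_real y * w2"
proof -
  define y where "y = Im (z / w1) / Im \<tau>"
  define x where "x = Re (z / w1) - y * Re \<tau>"
  have "z / w1 = of_real x + of_real y * \<tau>"
    using Im_tau by (simp add: complex_eq_iff x_def y_def)
  hence "z = (of_real x + of_real y * \<tau>) * w1" using w1_nz by (simp add: field_simps)
  thus ?thesis using comb_eq by metis
qed

lemma discrete: "\<exists>\<delta>>0. \<forall>l\<in>L. l \<noteq> 0 \<longrightarrow> \<delta> \<le> norm l"
proof -
  define \<delta> where "\<delta> = norm w1 * min 1 \<bar>Im \<tau>\<bar>"
  have "\<delta> > 0" using w1_nz Im_tau by (simp add: \<delta>_def)
  moreover have "\<delta> \<le> norm l" if "l \<in> L" "l \<noteq> 0" for l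
  proof -
    obtain m n :: int where l: "l = of_int m * w1 + of_int n * w2" using \<open>l \<in> L\<close> lattice_iff by blast
    have l2: "l = (of_int m + of_int n * \<tau>) * w1" using l comb_eq by metis
    have "min 1 \<bar>Im \<tau>\<bar> \<le> norm (of_int m + of_int n * \<tau>)"
    proof (cases "n = 0")
      case True
      then have "m \<noteq> 0" using \<open>l \<noteq> 0\<close> l by auto
      then show ?thesis using True by simp
    next
      case False
      have "1 \<le> \<bar>n\<bar>" using False by arith
      hence "(1::real) \<le> \<bar>of_int n\<bar>" by (metis of_int_1_le_iff of_int_abs)
      hence "\<bar>Im \<tau>\<bar> \<le> \<bar>of_int n\<bar> * \<bar>Im \<tau>\<bar>"
        using mult_right_mono[of 1 "\<bar>of_int n\<bar>" "\<bar>Im \<tau>\<bar>"] by simp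
      also have "\<dots> = \<bar>Im (of_int m + of_int n * \<tau>)\<bar>" by (simp add: abs_mult)
      also have "\<dots> \<le> norm (of_int m + of_int n * \<tau>)" by (rule abs_Im_le_cmod)
      finally show ?thesis by simp
    qed
    hence "norm w1 * min 1 \<bar>Im \<tau>\<bar> \<le> norm w1 * norm (of_int m + of_int n * \<tau>)"
      by (simp add: mult_left_mono)
    thus ?thesis by (simp add: \<delta>_def l2 norm_mult mult.commute)
  qed
  ultimately show ?thesis by blast
qed

lemma periodic_bounded:
  fixes g :: "complex \<Rightarrow> 'a::real_normed_vector"
  assumes cont: "continuous_on UNIV g" and per: "\<And>l z. l \<in> L \<Longrightarrow> g (z + l) = g z"
  shows "bounded (range g)"
proof -
  define K where "K = (\<lambda>p. of_real (fst p) * w1 + of_real (snd p) * w2) ` ({0..1::real} \<times> {0..1::real})"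
  have "compact K"
    unfolding K_def
    by (intro compact_continuous_image compact_Times compact_Icc continuous_intros)
  hence "compact (g ` K)"
    by (intro compact_continuous_image continuous_on_subset[OF cont]) auto
  hence b: "bounded (g ` K)" by (rule compact_imp_bounded)
  have "range g \<subseteq> g ` K"
  proof
    fix u assume "u \<in> range g"
    then obtain z where u: "u = g z" by auto
    obtain x y :: real where z: "z = of_real x * w1 + of_real y * w2" using real_coords by blast
    define l where "l = of_int \<lfloor>x\<rfloor> * w1 + of_int \<lfloor>y\<rfloor> * w2"
    have lL: "l \<in> L" unfolding l_def by blast
    have "z - l = of_real (x - of_int \<lfloor>x\<rfloor>) * w1 + of_real (y - of_int \<lfloor>y\<rfloor>) * w2"
      by (simp add: z l_def algebra_simps)
    moreover have "x - of_int \<lfloor>x\<rfloor> \<in> {0..1}" "y - of_int \<lfloor>y\<rfloor> \<in> {0..1}"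
    proof -
      have "0 \<le> x - of_int \<lfloor>x\<rfloor>" "x - of_int \<lfloor>x\<rfloor> \<le> 1" "0 \<le> y - of_int \<lfloor>y\<rfloor>" "y - of_int \<lfloor>y\<rfloor> \<le> 1"
        using of_int_floor_le[of x] real_of_int_floor_add_one_gt[of x]
            of_int_floor_le[of y] real_of_int_floor_add_one_gt[of y] by linarith+
      thus "x - of_int \<lfloor>x\<rfloor> \<in> {0..1}" "y - of_int \<lfloor>y\<rfloor> \<in> {0..1}" by auto
    qed
    ultimately have "z - l \<in> K" unfolding K_def
      by (intro image_eqI[where x="(x - of_int \<lfloor>x\<rfloor>, y - of_int \<lfloor>y\<rfloor>)"]) auto
    moreover have "g (z - l) = g z"
      using per[of "-l" z] lL by auto
    ultimately show "u \<in> g ` K" using u by (metis image_eqI)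
  qed
  thus ?thesis using b bounded_subset by blast
qed

end

context lat begin

lemma affine_lift:
  assumes aut: "torus_automorphism_lift L s"
  shows "\<exists>\<alpha> \<beta>. \<alpha> \<noteq> 0 \<and> s = (\<lambda>z. \<alpha> * z + \<beta>) \<and> (\<forall>l\<in>L. \<alpha> * l \<in> L) \<and> (\<forall>l\<in>L. l / \<alpha> \<in> L)"
proof -
  have hol: "s holomorphic_on UNIV" and per: "\<And>l z. l \<in> L \<Longrightarrow> s (z + l) - s z \<in> L"
    and sur: "\<And>w. \<exists>z. s z - w \<in> L" and inj: "\<And>z1 z2. s z1 - s z2 \<in> L \<Longrightarrow> z1 - z2 \<in> L"
    using aut unfolding torus_automorphism_lift_def lat_cong_def by auto
  have cs: "continuous_on UNIV s" using hol holomorphic_on_imp_continuous_on by blast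
  obtain \<delta> where \<delta>: "\<delta> > 0" "\<And>l. l \<in> L \<Longrightarrow> l \<noteq> 0 \<Longrightarrow> \<delta> \<le> norm l" using discrete by blast
  have step1: "\<exists>C. \<forall>z. s (z + l) = s z + C" if lL: "l \<in> L" for l
  proof -
    have c1: "continuous_on UNIV (\<lambda>z. s (z + l))"
      by (rule continuous_on_compose2[OF cs]) (auto intro!: continuous_intros)
    have "(\<lambda>z. s (z + l) - s z) constant_on UNIV"
    proof (rule continuous_discrete_range_constant)
      show "continuous_on UNIV (\<lambda>z. s (z + l) - s z)"
        using c1 cs by (intro continuous_intros)
      fix x :: complex
      show "\<exists>e>0. \<forall>y. y \<in> UNIV \<and> s (y + l) - s y \<noteq> s (x + l) - s x \<longrightarrow> e \<le> norm ((s (y + l) - s y) - (s (x + l) - s x))"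
      proof (intro exI[of _ \<delta>] conjI allI impI)
        fix y assume "y \<in> UNIV \<and> s (y + l) - s y \<noteq> s (x + l) - s x"
        moreover have "(s (y + l) - s y) - (s (x + l) - s x) \<in> L"
          using per[OF lL, of y] per[OF lL, of x] by blast
        ultimately show "\<delta> \<le> norm ((s (y + l) - s y) - (s (x + l) - s x))"
          using \<delta>(2) by auto
      qed (use \<delta> in auto)
    qed auto
    then obtain C where "\<And>z. s (z + l) - s z = C" unfolding constant_on_def by blast
    thus ?thesis by (intro exI[of _ C]) (auto simp: algebra_simps)
  qed
  define s' where "s' = deriv s"
  have ds: "\<And>w. (s has_field_derivative s' w) (at w)"
    unfolding s'_def using hol by (intro holomorphic_derivI) auto
  have s'per: "s' (z + l) = s' z" if lL2: "l \<in> L" for l z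
  proof -
    obtain C where C: "\<And>z. s (z + l) = s z + C" using step1[OF lL2] by blast
    have "((\<lambda>x. s (x + l)) has_field_derivative s' (z + l)) (at z)"
      using ds[of "z + l"] by (simp add: DERIV_shift)
    moreover have "((\<lambda>x. s (x + l)) has_field_derivative s' z) (at z)"
      unfolding C using ds[of z] by (auto intro!: derivative_eq_intros)
    ultimately show ?thesis by (rule DERIV_unique)
  qed
  have hs': "s' holomorphic_on UNIV" unfolding s'_def using hol by (intro holomorphic_deriv) auto
  have "bounded (range s')"
    by (rule periodic_bounded) (use hs' holomorphic_on_imp_continuous_on s'per in auto)
  then have "s' constant_on UNIV" using hs' Liouville_theorem by blast
  then obtain \<alpha> where \<alpha>: "\<And>z. s' z = \<alpha>" unfolding constant_on_def by blast
  have "\<exists>c. \<forall>x\<in>UNIV. s x - \<alpha> * x = c"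
  proof (rule has_field_derivative_zero_constant)
    fix x :: complex
    show "((\<lambda>x. s x - \<alpha> * x) has_field_derivative 0) (at x within UNIV)"
      using ds[of x] \<alpha>[of x] by (auto intro!: derivative_eq_intros)
  qed auto
  then obtain \<beta> where \<beta>: "\<And>x. s x - \<alpha> * x = \<beta>" by blast
  have seq: "s = (\<lambda>z. \<alpha> * z + \<beta>)" using \<beta> by (auto simp: fun_eq_iff algebra_simps)
  have aL: "\<alpha> * l \<in> L" if "l \<in> L" for l
    using per[OF that, of 0] by (simp add: seq)
  have anz: "\<alpha> \<noteq> 0"
  proof
    assume "\<alpha> = 0"
    then obtain z where "s z - (\<beta> + w1 / 2) \<in> L" using sur by blast
    hence "- (w1 / 2) \<in> L" using \<open>\<alpha> = 0\<close> by (simp add: seq)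
    then obtain m n :: int where mn: "- (w1 / 2) = of_int m * w1 + of_int n * w2"
      unfolding lattice_iff by blast
    have "of_real (of_int m + 1/2) * w1 + of_real (of_int n) * w2 = 0"
    proof -
      have "of_real (of_int m + 1/2) * w1 + of_real (of_int n) * w2 = (of_int m * w1 + of_int n * w2) + w1/2"
        by (simp add: algebra_simps)
      also have "\<dots> = 0" using mn[symmetric] by simp
      finally show ?thesis .
    qed
    from real_indep[OF this] have "of_int m + 1/2 = (0::real)" by simp
    hence "2 * of_int m + 1 = (0::real)" by simp
    hence "2 * m + 1 = 0" by linarith
    thus False by presburger
  qed
  have aiL: "l / \<alpha> \<in> L" if "l \<in> L" for l
  proof -
    have "s (l / \<alpha>) - s 0 = l" using anz by (simp add: seq)
    hence "l / \<alpha> - 0 \<in> L" using inj[of "l / \<alpha>" 0] that by simp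
    thus ?thesis by simp
  qed
  show ?thesis using anz seq aL aiL by blast
qed

end

context lat begin


lemma mult_matrix:
  assumes aL: "\<forall>l\<in>L. \<alpha> * l \<in> L"
  shows "\<exists>a b c d::int. \<alpha> * w1 = of_int a * w1 + of_int b * w2 \<and> \<alpha> * w2 = of_int c * w1 + of_int d * w2
     \<and> \<alpha>\<^sup>2 - of_int (a + d) * \<alpha> + of_int (a * d - b * c) = 0 \<and> \<alpha> = of_int a + of_int b * \<tau>"
proof -
  have "\<alpha> * w1 \<in> L" "\<alpha> * w2 \<in> L" using aL by auto
  then obtain a b c d :: int where ab: "\<alpha> * w1 = of_int a * w1 + of_int b * w2"
    and cd: "\<alpha> * w2 = of_int c * w1 + of_int d * w2"
    unfolding lattice_iff by blast
  have "\<alpha> * w1 = (of_int a + of_int b * \<tau>) * w1" using ab comb_eq by metis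
  hence e1: "\<alpha> = of_int a + of_int b * \<tau>" using w1_nz by simp
  have "(\<alpha> * \<tau>) * w1 = \<alpha> * w2" using w1_nz by (simp add: \<tau>_def)
  also have "\<dots> = (of_int c + of_int d * \<tau>) * w1" using cd comb_eq by metis
  finally have "(\<alpha> * \<tau>) * w1 = (of_int c + of_int d * \<tau>) * w1" .
  hence e2: "\<alpha> * \<tau> = of_int c + of_int d * \<tau>" using w1_nz by simp
  have "\<alpha>\<^sup>2 - of_int (a + d) * \<alpha> + of_int (a * d - b * c) = of_int b * (\<alpha> * \<tau> - of_int c - of_int d * \<tau>)"
    unfolding e1 by (simp add: algebra_simps power2_eq_square)
  also have "\<dots> = 0" using e2 by simp
  finally show ?thesis using ab cd e1 by blast
qed

lemma alpha_cases:
  assumes anz: "\<alpha> \<noteq> 0" and aL: "\<forall>l\<in>L. \<alpha> * l \<in> L" and aiL: "\<forall>l\<in>L. l / \<alpha> \<in> L"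
  shows "\<alpha> = 1 \<or> \<alpha> = -1 \<or> (\<exists>a b c d::int. \<alpha> * w1 = of_int a * w1 + of_int b * w2 \<and> \<alpha> * w2 = of_int c * w1 + of_int d * w2
     \<and> a * d - b * c = 1 \<and> a + d \<in> {-1, 0, 1} \<and> \<alpha>\<^sup>2 = of_int (a + d) * \<alpha> - 1)"
proof -
  define \<alpha>' where "\<alpha>' = inverse \<alpha>"
  have a'L: "\<forall>l\<in>L. \<alpha>' * l \<in> L" using aiL by (simp add: \<alpha>'_def field_simps)
  obtain a b c d :: int where M: "\<alpha> * w1 = of_int a * w1 + of_int b * w2" "\<alpha> * w2 = of_int c * w1 + of_int d * w2"
     "\<alpha>\<^sup>2 - of_int (a + d) * \<alpha> + of_int (a * d - b * c) = 0" "\<alpha> = of_int a + of_int b * \<tau>"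
    using mult_matrix[OF aL] by blast
  obtain a' b' c' d' :: int where M': "\<alpha>'\<^sup>2 - of_int (a' + d') * \<alpha>' + of_int (a' * d' - b' * c') = 0" "\<alpha>' = of_int a' + of_int b' * \<tau>"
    using mult_matrix[OF a'L] by blast
  have quad_norm: "of_int (A * E - B * C) = (cmod x)\<^sup>2 \<and> of_int (A + E) = 2 * Re x"
    if q: "x\<^sup>2 - of_int (A + E) * x + of_int (A * E - B * C) = 0" and imx: "Im x \<noteq> 0" for x :: complex and A B C E :: int
  proof -
    define t where "t = (of_int (A + E) :: complex)"
    define D where "D = (of_int (A * E - B * C) :: complex)"
    have q1: "x\<^sup>2 - t * x + D = 0" using q by (simp add: t_def D_def)
    have "cnj (x\<^sup>2 - t * x + D) = 0" using q1 by simp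
    hence q2: "(cnj x)\<^sup>2 - t * cnj x + D = 0" by (simp add: t_def D_def)
    have "(x - cnj x) * (x + cnj x - t) = (x\<^sup>2 - t * x + D) - ((cnj x)\<^sup>2 - t * cnj x + D)"
      by (simp add: algebra_simps power2_eq_square)
    also have "\<dots> = 0" using q1 q2 by simp
    finally have "(x - cnj x) * (x + cnj x - t) = 0" .
    moreover have "x - cnj x \<noteq> 0" using imx by (simp add: complex_eq_iff)
    ultimately have tx: "t = x + cnj x" by simp
    have "D = x * cnj x" using q1 tx by (simp add: algebra_simps power2_eq_square)
    hence "D = of_real ((cmod x)\<^sup>2)" by (metis complex_norm_square)
    moreover have "t = of_real (2 * Re x)" using tx by (simp add: complex_add_cnj)
    ultimately show ?thesis unfolding t_def D_def
      by (metis of_real_eq_iff of_real_of_int_eq)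
  qed
  show ?thesis
  proof (cases "Im \<alpha> = 0")
    case True
    have "Im \<alpha> = of_int b * Im \<tau>" using M(4) by simp
    hence "b = 0" using True Im_tau by simp
    hence aa: "\<alpha> = of_int a" using M(4) by simp
    have "Im \<alpha>' = 0" using aa by (simp add: \<alpha>'_def)
    moreover have "Im \<alpha>' = of_int b' * Im \<tau>" using M'(2) by simp
    ultimately have "b' = 0" using Im_tau by simp
    hence aa': "\<alpha>' = of_int a'" using M'(2) by simp
    have "\<alpha> * \<alpha>' = 1" using anz by (simp add: \<alpha>'_def)
    hence "of_int (a * a') = (1::complex)" using aa aa' by simp
    hence "a * a' = 1" by (metis of_int_eq_1_iff)
    hence "a = 1 \<or> a = -1" using zmult_eq_1_iff by blast
    thus ?thesis using aa by auto
  next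
    case False
    have Q: "of_int (a * d - b * c) = (cmod \<alpha>)\<^sup>2" "of_int (a + d) = 2 * Re \<alpha>"
      using quad_norm[OF M(3) False] by auto
    have F': "Im \<alpha>' \<noteq> 0" using False anz by (simp add: \<alpha>'_def)
    have Q': "of_int (a' * d' - b' * c') = (cmod \<alpha>')\<^sup>2"
      using quad_norm[OF M'(1) F'] by auto
    have "(cmod \<alpha>)\<^sup>2 * (cmod \<alpha>')\<^sup>2 = (cmod \<alpha> * cmod \<alpha>')\<^sup>2" by (simp add: power_mult_distrib)
    also have "cmod \<alpha> * cmod \<alpha>' = 1" using anz by (simp add: \<alpha>'_def norm_inverse)
    finally have "(cmod \<alpha>)\<^sup>2 * (cmod \<alpha>')\<^sup>2 = 1" by simp
    hence "of_int ((a * d - b * c) * (a' * d' - b' * c')) = (1::real)" using Q Q' by simp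
    hence D1: "(a * d - b * c) * (a' * d' - b' * c') = 1" by (metis of_int_eq_1_iff)
    have "(cmod \<alpha>)\<^sup>2 > 0" using anz by simp
    hence "a * d - b * c > 0" using Q(1) by (metis of_int_0_less_iff)
    hence D: "a * d - b * c = 1" using D1 pos_zmult_eq_1_iff by blast
    hence "(cmod \<alpha>)\<^sup>2 = 1" using Q(1) by simp
    hence "(Re \<alpha>)\<^sup>2 + (Im \<alpha>)\<^sup>2 = 1" by (simp add: cmod_power2)
    moreover have "(Im \<alpha>)\<^sup>2 > 0" using False by simp
    ultimately have "(Re \<alpha>)\<^sup>2 < 1" by linarith
    hence "\<bar>Re \<alpha>\<bar> < 1" by (simp add: abs_square_less_1)
    hence "\<bar>of_int (a + d)\<bar> < (2::real)" using Q(2) by simp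
    hence "\<bar>a + d\<bar> < 2" by linarith
    hence t: "a + d \<in> {-1, 0, 1}" by auto
    have "\<alpha>\<^sup>2 = of_int (a + d) * \<alpha> - 1" using M(3) D by (simp add: algebra_simps)
    thus ?thesis using M(1,2) D t by blast
  qed
qed

end

definition inB :: "int \<Rightarrow> int \<Rightarrow> int \<Rightarrow> int \<Rightarrow> int \<Rightarrow> int \<Rightarrow> bool" where
  "inB A B C E m k \<longleftrightarrow> (\<exists>u1 u2. m = A * u1 + C * u2 \<and> k = B * u1 + E * u2)"

lemma inB_crit:
  fixes A B C E m k n :: int
  assumes "A * E - B * C = n" "n \<noteq> 0" "n dvd (E * m - C * k)" "n dvd (A * k - B * m)"
  shows "inB A B C E m k"
proof -
  obtain u1 where u1: "E * m - C * k = n * u1" using assms(3) by (auto elim: dvdE)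
  obtain u2 where u2: "A * k - B * m = n * u2" using assms(4) by (auto elim: dvdE)
  have "n * (A * u1 + C * u2) = A * (E * m - C * k) + C * (A * k - B * m)" by (simp add: u1 u2 algebra_simps)
  also have "\<dots> = (A * E - B * C) * m" by (simp add: algebra_simps)
  finally have e1: "m = A * u1 + C * u2" using assms(1,2) by simp
  have "n * (B * u1 + E * u2) = B * (E * m - C * k) + E * (A * k - B * m)" by (simp add: u1 u2 algebra_simps)
  also have "\<dots> = (A * E - B * C) * k" by (simp add: algebra_simps)
  finally have e2: "k = B * u1 + E * u2" using assms(1,2) by simp
  show ?thesis unfolding inB_def using e1 e2 by blast
qed

lemma dvd_aux: "(n::int) dvd x \<Longrightarrow> n dvd n * k - B * x"
  by (intro dvd_diff dvd_triv_left dvd_mult) 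

lemma key_functional:
  fixes A B C E n :: int
  assumes pn: "prime n" and det: "A * E - B * C = n"
  shows "\<exists>r1 r2. \<forall>m k. \<not> inB A B C E m k \<longrightarrow> \<not> n dvd (r1 * m + r2 * k)"
proof -
  have n0: "n \<noteq> 0" using pn by auto
  have id1: "E * (A * k - B * m) = n * k - B * (E * m - C * k)" for m k
    unfolding det[symmetric] by (simp add: algebra_simps)
  have id2: "C * (A * k - B * m) = n * m - A * (E * m - C * k)" for m k
    unfolding det[symmetric] by (simp add: algebra_simps)
  have id3: "B * (E * m - C * k) = n * k - E * (A * k - B * m)" for m k
    unfolding det[symmetric] by (simp add: algebra_simps)
  have id4: "A * (E * m - C * k) = n * m - C * (A * k - B * m)" for m k
    unfolding det[symmetric] by (simp add: algebra_simps)
  show ?thesis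
  proof (cases "\<not> n dvd E \<or> \<not> n dvd C")
    case True
    have "\<not> n dvd (E * m + (- C) * k)" if nb: "\<not> inB A B C E m k" for m k
    proof
      assume d: "n dvd E * m + (- C) * k"
      hence dx: "n dvd (E * m - C * k)" by simp
      have "n dvd E * (A * k - B * m)"
        unfolding id1 using dx by (rule dvd_aux)
      moreover have "n dvd C * (A * k - B * m)"
        unfolding id2 using dx by (rule dvd_aux)
      ultimately have "n dvd (A * k - B * m)" using True pn prime_dvd_mult_iff by blast
      from inB_crit[OF det n0 dx this] nb show False by blast
    qed
    thus ?thesis by blast
  next
    case False
    hence nE: "n dvd E" and nC: "n dvd C" by auto
    have "\<not> n dvd A \<or> \<not> n dvd B"
    proof (rule ccontr)
      assume "\<not> (\<not> n dvd A \<or> \<not> n dvd B)"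
      hence "n dvd A \<and> n dvd B" by blast
      hence "n * n dvd A * E - B * C" using nE nC by (intro dvd_diff mult_dvd_mono) (auto simp: mult.commute)
      hence "n * n dvd n * 1" using det by simp
      hence "n dvd 1" using n0 by (subst (asm) dvd_mult_cancel_left) auto
      thus False using pn not_prime_unit by blast
    qed
    have "\<not> n dvd ((- B) * m + A * k)" if nb: "\<not> inB A B C E m k" for m k
    proof
      assume d: "n dvd (- B) * m + A * k"
      hence dy: "n dvd (A * k - B * m)" by (simp add: algebra_simps)
      have "n dvd B * (E * m - C * k)"
        unfolding id3 using dy by (rule dvd_aux)
      moreover have "n dvd A * (E * m - C * k)"
        unfolding id4 using dy by (rule dvd_aux)
      ultimately have "n dvd (E * m - C * k)" using \<open>\<not> n dvd A \<or> \<not> n dvd B\<close> pn prime_dvd_mult_iff by blast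
      from inB_crit[OF det n0 this dy] nb show False by blast
    qed
    thus ?thesis by blast
  qed
qed

lemma mod3_cases: "(x::int) mod 3 \<in> {0,1,2}"
proof -
  have "0 \<le> x mod 3" "x mod 3 < 3" by simp_all
  hence "x mod 3 = 0 \<or> x mod 3 = 1 \<or> x mod 3 = 2" by arith
  thus ?thesis by blast
qed

lemma index1:
  fixes A B C E :: int
  assumes "A * E - B * C = 1"
  shows "inB A B C E m k"
  using inB_crit[OF assms] by simp

lemma index2:
  fixes A B C E :: int
  assumes "A * E - B * C = 2"
    and "\<not> inB A B C E m1 k1" "\<not> inB A B C E m2 k2" "\<not> inB A B C E (m1 - m2) (k1 - k2)"
  shows False
proof -
  have "prime (2::int)" by simp
  from key_functional[OF this assms(1)] obtain r1 r2 where
    r: "\<And>m k. \<not> inB A B C E m k \<Longrightarrow> \<not> 2 dvd (r1 * m + r2 * k)" by blast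
  define y1 where "y1 = r1 * m1 + r2 * k1"
  define y2 where "y2 = r1 * m2 + r2 * k2"
  have eq: "y1 - y2 = r1 * (m1 - m2) + r2 * (k1 - k2)" by (simp add: y1_def y2_def algebra_simps)
  have "\<not> 2 dvd y1" unfolding y1_def by (rule r[OF assms(2)])
  moreover have "\<not> 2 dvd y2" unfolding y2_def by (rule r[OF assms(3)])
  moreover have "\<not> 2 dvd (y1 - y2)" unfolding eq by (rule r[OF assms(4)])
  ultimately show False using even_diff[of y1 y2] by simp
qed

lemma index3:
  fixes A B C E :: int
  assumes "A * E - B * C = 3"
    and "\<not> inB A B C E m1 k1" "\<not> inB A B C E m2 k2" "\<not> inB A B C E m3 k3"
    and "\<not> inB A B C E (m1 - m2) (k1 - k2)" "\<not> inB A B C E (m1 - m3) (k1 - k3)" "\<not> inB A B C E (m2 - m3) (k2 - k3)"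
  shows False
proof -
  have "prime (3::int)" by simp
  from key_functional[OF this assms(1)] obtain r1 r2 where
    r: "\<And>m k. \<not> inB A B C E m k \<Longrightarrow> \<not> 3 dvd (r1 * m + r2 * k)" by blast
  define x1 where "x1 = r1 * m1 + r2 * k1"
  define x2 where "x2 = r1 * m2 + r2 * k2"
  define x3 where "x3 = r1 * m3 + r2 * k3"
  have "r1 * (m1 - m2) + r2 * (k1 - k2) = x1 - x2" "r1 * (m1 - m3) + r2 * (k1 - k3) = x1 - x3"
     "r1 * (m2 - m3) + r2 * (k2 - k3) = x2 - x3"
    by (simp_all add: x1_def x2_def x3_def algebra_simps)
  hence "\<not> 3 dvd x1" "\<not> 3 dvd x2" "\<not> 3 dvd x3" "\<not> 3 dvd (x1 - x2)" "\<not> 3 dvd (x1 - x3)" "\<not> 3 dvd (x2 - x3)"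
    using r[OF assms(2)] r[OF assms(3)] r[OF assms(4)] r[OF assms(5)] r[OF assms(6)] r[OF assms(7)]
    unfolding x1_def x2_def x3_def by simp_all
  hence "x1 mod 3 \<noteq> 0" "x2 mod 3 \<noteq> 0" "x3 mod 3 \<noteq> 0" "x1 mod 3 \<noteq> x2 mod 3" "x1 mod 3 \<noteq> x3 mod 3" "x2 mod 3 \<noteq> x3 mod 3"
    by (simp_all add: mod_eq_dvd_iff dvd_eq_mod_eq_0[symmetric])
  moreover have "x1 mod 3 \<in> {0,1,2}" "x2 mod 3 \<in> {0,1,2}" "x3 mod 3 \<in> {0,1,2}"
    using mod3_cases by blast+
  ultimately show False by auto
qed

lemma filtermap_shift_at: "filtermap (\<lambda>w. w + l) (at z) = at (z + (l::'a::real_normed_vector))"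
  using filtermap_at_shift[of "-l" z] by simp

lemma filtermap_reflect_at: "filtermap (\<lambda>w. b - w) (at z) = at (b - (z::'a::real_normed_vector))"
proof -
  have "filtermap (\<lambda>w. b - w) (at z) = filtermap (\<lambda>x. - x) (filtermap (\<lambda>x. x - b) (at z))"
    by (simp add: filtermap_filtermap)
  also have "\<dots> = at (b - z)" by (simp add: filtermap_at_shift filtermap_at_minus)
  finally show ?thesis .
qed

locale ellsym = lat +
  fixes f :: "complex \<Rightarrow> complex" and \<beta> z0 :: complex
  assumes mero: "f meromorphic_on UNIV"
    and per: "\<And>l z. l \<in> L \<Longrightarrow> eventually (\<lambda>w. f (w + l) = f w) (at z)"
    and nz: "\<And>z. frequently (\<lambda>w. f w \<noteq> 0) (at z)"
    and res0: "\<And>z. residue f z = 0"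
    and zeros: "\<And>z. zorder f z > 0 \<Longrightarrow> z - z0 \<in> L"
    and z0pos: "zorder f z0 > 0"
    and sym: "\<And>z. eventually (\<lambda>w. f (\<beta> - w) = - f w) (at z)"
begin

definition "g = remove_sings f"
definition "S = {z. \<not> is_pole f z}"

lemma mero_at: "f meromorphic_on {z}" using mero meromorphic_on_subset by blast
lemma isol: "isolated_singularity_at f z" using mero_at meromorphic_on_isolated_singularity by blast
lemma ness: "not_essential f z" using mero_at meromorphic_on_not_essential by blast

lemma tendsto_g: "z \<in> S \<Longrightarrow> f \<midarrow>z\<rightarrow> g z"
proof -
  assume "z \<in> S"
  then obtain c where c: "f \<midarrow>z\<rightarrow> c" using ness[of z] unfolding not_essential_def S_def by blast
  hence "g z = c" unfolding g_def by (rule remove_sings_eqI)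
  thus ?thesis using c by simp
qed

lemma g_analytic: "z \<in> S \<Longrightarrow> g analytic_on {z}"
  unfolding g_def using remove_sings_analytic_at[OF isol tendsto_g[unfolded g_def]] by blast

lemma S_open: "open S"
  unfolding open_contains_ball
proof
  fix z assume zS: "z \<in> S"
  have "eventually (\<lambda>w. \<not> is_pole f w) (at z)" by (rule eventually_not_pole[OF isol])
  then obtain e where e: "e > 0" "\<And>w. w \<noteq> z \<Longrightarrow> dist w z < e \<Longrightarrow> \<not> is_pole f w"
    unfolding eventually_at by blast
  have "ball z e \<subseteq> S"
  proof
    fix w assume "w \<in> ball z e"
    thus "w \<in> S" using e zS by (cases "w = z") (auto simp: S_def dist_commute)
  qed
  thus "\<exists>e>0. ball z e \<subseteq> S" using e by blast
qed

lemma g_hol: "g holomorphic_on S"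
  using g_analytic analytic_on_analytic_at analytic_imp_holomorphic by blast

lemma pole_shift: "l \<in> L \<Longrightarrow> is_pole f (z + l) \<longleftrightarrow> is_pole f z"
proof -
  assume lL: "l \<in> L"
  have "is_pole (f \<circ> (\<lambda>w. w + l)) z \<longleftrightarrow> is_pole f (z + l)"
    by (rule is_pole_compose_iff[OF filtermap_shift_at])
  moreover have "is_pole (f \<circ> (\<lambda>w. w + l)) z \<longleftrightarrow> is_pole f z"
    by (rule is_pole_cong) (use per[OF lL, of z] in auto)
  ultimately show ?thesis by simp
qed

lemma pole_reflect: "is_pole f (\<beta> - z) \<longleftrightarrow> is_pole f z"
proof -
  have "is_pole (f \<circ> (\<lambda>w. \<beta> - w)) z \<longleftrightarrow> is_pole f (\<beta> - z)"
    by (rule is_pole_compose_iff[OF filtermap_reflect_at])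
  moreover have "is_pole (f \<circ> (\<lambda>w. \<beta> - w)) z \<longleftrightarrow> is_pole (\<lambda>w. - f w) z"
    by (rule is_pole_cong) (use sym[of z] in auto)
  ultimately show ?thesis by simp
qed

lemma S_shift: "l \<in> L \<Longrightarrow> z + l \<in> S \<longleftrightarrow> z \<in> S"
  unfolding S_def using pole_shift by simp

lemma S_reflect: "\<beta> - z \<in> S \<longleftrightarrow> z \<in> S"
  unfolding S_def using pole_reflect by simp

lemma g_shift: "l \<in> L \<Longrightarrow> g (z + l) = g z"
proof -
  assume lL: "l \<in> L"
  show ?thesis
  proof (cases "z \<in> S")
    case True
    have "(f \<circ> (\<lambda>w. w + l)) \<midarrow>z\<rightarrow> g z"
      by (rule tendsto_cong[THEN iffD1, OF _ tendsto_g[OF True]]) (use per[OF lL, of z] in \<open>auto elim: eventually_mono\<close>)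
    hence "filterlim f (nhds (g z)) (filtermap (\<lambda>w. w + l) (at z))"
      by (simp add: filterlim_filtermap comp_def)
    hence "f \<midarrow>(z + l)\<rightarrow> g z" by (simp only: filtermap_shift_at)
    thus ?thesis unfolding g_def by (rule remove_sings_eqI)
  next
    case False
    hence "is_pole f z" "is_pole f (z + l)" using pole_shift[OF lL] by (auto simp: S_def)
    thus ?thesis unfolding g_def by simp
  qed
qed

lemma g_reflect: "g (\<beta> - z) = - g z"
proof (cases "z \<in> S")
  case True
  hence bS: "\<beta> - z \<in> S" using S_reflect by simp
  have "filterlim f (nhds (g (\<beta> - z))) (filtermap (\<lambda>w. \<beta> - w) (at z))"
    using tendsto_g[OF bS] by (simp only: filtermap_reflect_at)
  hence "(f \<circ> (\<lambda>w. \<beta> - w)) \<midarrow>z\<rightarrow> g (\<beta> - z)"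
    by (simp add: filterlim_filtermap comp_def)
  hence "(\<lambda>w. - f w) \<midarrow>z\<rightarrow> g (\<beta> - z)"
    by (rule tendsto_cong[THEN iffD1, rotated]) (use sym[of z] in \<open>auto elim: eventually_mono\<close>)
  hence "(\<lambda>w. - (- f w)) \<midarrow>z\<rightarrow> - g (\<beta> - z)" by (rule tendsto_minus)
  hence "f \<midarrow>z\<rightarrow> - g (\<beta> - z)" by simp
  hence "g z = - g (\<beta> - z)" unfolding g_def by (rule remove_sings_eqI)
  thus ?thesis by simp
next
  case False
  hence "is_pole f z" "is_pole f (\<beta> - z)" using pole_reflect by (auto simp: S_def)
  thus ?thesis unfolding g_def by simp
qed

lemma g_eq_f: "eventually (\<lambda>w. g w = f w) (at z)"
  unfolding g_def by (rule eventually_remove_sings_eq_at[OF isol])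

lemma poles_finite: "compact K \<Longrightarrow> finite (K \<inter> -S)"
  using finite_not_islimpt_in_compact[of K "{w. is_pole f w}"] not_islimpt_poles[OF isol]
  by (auto simp: S_def Compl_eq)

lemma poles_countable: "countable (-S)"
proof -
  have "-S = (\<Union>n::nat. cball 0 (real n) \<inter> -S)"
  proof (intro equalityI subsetI)
    fix z assume "z \<in> -S"
    obtain n :: nat where "norm z \<le> real n" using real_arch_simple by blast
    thus "z \<in> (\<Union>n::nat. cball 0 (real n) \<inter> -S)" using \<open>z \<in> -S\<close> by auto
  qed auto
  moreover have "countable (cball 0 (real n) \<inter> -S)" for n
    using poles_finite[of "cball 0 (real n)"] by (simp add: countable_finite)
  ultimately show ?thesis by (metis countable_UN countableI_type)
qed

lemma S_connected: "connected S"
proof -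
  have "connected (UNIV - (-S))"
    by (rule connected_open_diff_countable) (use poles_countable in auto)
  thus ?thesis by (simp add: Diff_Compl)
qed

lemma residue_g: "residue g z = 0"
  unfolding g_def using res0 residue_remove_sings[OF isol] by simp

end

context ellsym begin

lemma closed_path_zero:
  assumes vp: "valid_path \<gamma>" and cl: "pathfinish \<gamma> = pathstart \<gamma>" and im: "path_image \<gamma> \<subseteq> S"
  shows "(g has_contour_integral 0) \<gamma>"
proof -
  have "compact (path_image \<gamma>)" using vp by (intro compact_path_image valid_path_imp_path)
  then obtain R where R: "R > 0" "path_image \<gamma> \<subseteq> ball 0 R"
    using bounded_subset_ballD compact_imp_bounded by blast
  define pts where "pts = ball 0 R \<inter> -S"
  have fin: "finite pts"
    using poles_finite[of "cball 0 R"] unfolding pts_def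
    by (rule finite_subset[rotated]) auto
  have "contour_integral \<gamma> g = 2 * pi * \<i> * (\<Sum>p\<in>pts. winding_number \<gamma> p * residue g p)"
  proof (rule Residue_theorem[OF open_ball connected_ball fin _ vp cl])
    show "g holomorphic_on ball 0 R - pts"
      by (rule holomorphic_on_subset[OF g_hol]) (auto simp: pts_def)
    show "path_image \<gamma> \<subseteq> ball 0 R - pts" using R im by (auto simp: pts_def)
    show "\<forall>z. z \<notin> ball 0 R \<longrightarrow> winding_number \<gamma> z = 0"
      using winding_number_zero_outside[OF valid_path_imp_path[OF vp] convex_ball cl _ R(2)] by blast
  qed
  also have "\<dots> = 0" by (simp add: residue_g)
  finally have "contour_integral \<gamma> g = 0" .
  moreover have "g contour_integrable_on \<gamma>"
    by (rule contour_integrable_holomorphic_simple[OF g_hol S_open vp im])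
  ultimately show ?thesis using has_contour_integral_integral by fastforce
qed

lemma primitive: "\<exists>F. \<forall>z\<in>S. (F has_field_derivative g z) (at z)"
proof (cases "S = {}")
  case True thus ?thesis by simp
next
  case False
  then obtain a where aS: "a \<in> S" by blast
  define pth where "pth = (\<lambda>z. SOME p. polynomial_function p \<and> path_image p \<subseteq> S \<and> pathstart p = a \<and> pathfinish p = z)"
  have pth: "polynomial_function (pth z) \<and> path_image (pth z) \<subseteq> S \<and> pathstart (pth z) = a \<and> pathfinish (pth z) = z"
    if "z \<in> S" for z
    unfolding pth_def
    by (rule someI_ex[OF connected_open_polynomial_connected[OF S_open S_connected aS that]])
  define F where "F = (\<lambda>z. contour_integral (pth z) g)"
  have vpth: "valid_path (pth z)" if "z \<in> S" for z
    using pth[OF that] valid_path_polynomial_function by blast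
  have intF: "(g has_contour_integral F z) (pth z)" if "z \<in> S" for z
    unfolding F_def using pth[OF that]
    by (intro has_contour_integral_integral contour_integrable_holomorphic_simple[OF g_hol S_open vpth[OF that]]) simp
  have "(F has_field_derivative g x) (at x)" if xS: "x \<in> S" for x
  proof -
    obtain d where d: "d > 0" "ball x d \<subseteq> S" using S_open xS open_contains_ball by blast
    obtain G where G: "\<And>y. y \<in> ball x d \<Longrightarrow> (G has_field_derivative g y) (at y within ball x d)"
      using holomorphic_convex_primitive'[OF convex_ball open_ball holomorphic_on_subset[OF g_hol d(2)]] by blast
    have eq: "F y = F x + (G y - G x)" if yb: "y \<in> ball x d" for y
    proof -
      have yS: "y \<in> S" using yb d by auto
      have seg: "closed_segment x y \<subseteq> ball x d"
        using yb d(1) by (intro closed_segment_subset convex_ball) auto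
      have lin: "(g has_contour_integral (G y - G x)) (linepath x y)"
        using contour_integral_primitive[OF G, of "linepath x y"] seg by simp
      define \<gamma> where "\<gamma> = pth x +++ linepath x y +++ reversepath (pth y)"
      have v1: "valid_path (linepath x y +++ reversepath (pth y))"
        using vpth[OF yS] pth[OF yS] by (intro valid_path_join) auto
      have vg: "valid_path \<gamma>" unfolding \<gamma>_def using pth[OF xS]
        by (intro valid_path_join[OF vpth[OF xS] v1]) auto
      have vr: "valid_path (reversepath (pth y))" using vpth[OF yS] by simp
      have i2: "(g has_contour_integral (- F y)) (reversepath (pth y))"
        by (rule has_contour_integral_reversepath[OF vpth[OF yS] intF[OF yS]])
      have i12: "(g has_contour_integral ((G y - G x) + - F y)) (linepath x y +++ reversepath (pth y))"
        by (rule has_contour_integral_join[OF lin i2 valid_path_linepath vr])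
      have "(g has_contour_integral (F x + ((G y - G x) + - F y))) \<gamma>"
        unfolding \<gamma>_def by (rule has_contour_integral_join[OF intF[OF xS] i12 vpth[OF xS] v1])
      moreover have "(g has_contour_integral 0) \<gamma>"
      proof (rule closed_path_zero[OF vg])
        show "pathfinish \<gamma> = pathstart \<gamma>" unfolding \<gamma>_def using pth[OF xS] pth[OF yS] by simp
        have pj1: "path_image (linepath x y +++ reversepath (pth y)) = closed_segment x y \<union> path_image (pth y)"
          using pth[OF yS] by (simp add: path_image_join path_image_reversepath)
        have "path_image \<gamma> = path_image (pth x) \<union> (closed_segment x y \<union> path_image (pth y))"
          unfolding \<gamma>_def using pth[OF xS] by (simp add: path_image_join pj1)
        thus "path_image \<gamma> \<subseteq> S" using pth[OF xS] pth[OF yS] seg d(2) by blast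
      qed
      ultimately have h0: "F x + ((G y - G x) + - F y) = 0" by (rule has_contour_integral_unique)
      have "F y = F x + (G y - G x) - (F x + ((G y - G x) + - F y))" by (simp add: algebra_simps)
      thus ?thesis unfolding h0 by simp
    qed
    have xb: "x \<in> ball x d" using d(1) by simp
    have "(G has_field_derivative g x) (at x)"
      using G[OF xb] by (simp add: at_within_open[OF xb open_ball])
    hence "((\<lambda>y. F x + (G y - G x)) has_field_derivative (0 + (g x - 0))) (at x)"
      by (intro DERIV_add DERIV_const DERIV_diff)
    hence d0: "((\<lambda>y. F x + (G y - G x)) has_field_derivative g x) (at x)" by simp
    show ?thesis
      by (rule has_field_derivative_transform_within_open[OF d0 open_ball xb]) (use eq in simp)
  qed
  thus ?thesis by blast
qed

end

context ellsym begin

lemma z0S: "z0 \<in> S"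
  using z0pos isolated_pole_imp_neg_zorder[OF isol] unfolding S_def by force

lemma const_on_S:
  assumes "\<And>z. z \<in> S \<Longrightarrow> (\<phi> has_field_derivative 0) (at z)"
  shows "\<exists>c. \<forall>z\<in>S. \<phi> z = c"
proof -
  have "continuous_on S \<phi>"
    using assms by (meson DERIV_isCont continuous_at_imp_continuous_on)
  then obtain c where "\<And>z. z \<in> S \<Longrightarrow> \<phi> z = c"
    using DERIV_zero_connected_constant[OF S_connected S_open finite.emptyI, of \<phi>] assms by auto
  thus ?thesis by blast
qed

lemma F_exists: "\<exists>F. (\<forall>z\<in>S. (F has_field_derivative g z) (at z)) \<and> (\<forall>l\<in>L. \<forall>z\<in>S. F (z + l) = F z)"
proof -
  obtain F where F: "\<And>z. z \<in> S \<Longrightarrow> (F has_field_derivative g z) (at z)" using primitive by blast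
  have shift: "\<exists>c. \<forall>z\<in>S. F (z + l) = F z + c" if lL: "l \<in> L" for l
  proof -
    have "\<exists>c. \<forall>z\<in>S. F (z + l) - F z = c"
    proof (rule const_on_S)
      fix z assume zS: "z \<in> S"
      have "((\<lambda>w. F (w + l)) has_field_derivative g (z + l)) (at z)"
        using F[of "z + l"] S_shift[OF lL, of z] zS by (simp add: DERIV_shift)
      hence "((\<lambda>w. F (w + l) - F w) has_field_derivative g (z + l) - g z) (at z)"
        by (intro DERIV_diff F zS)
      thus "((\<lambda>w. F (w + l) - F w) has_field_derivative 0) (at z)" using g_shift[OF lL] by simp
    qed
    then obtain c where "\<And>z. z \<in> S \<Longrightarrow> F (z + l) - F z = c" by blast
    hence "\<forall>z\<in>S. F (z + l) = F z + c" by (metis diff_add_cancel add.commute)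
    thus ?thesis by blast
  qed
  have "\<exists>K. \<forall>z\<in>S. F (\<beta> - z) - F z = K"
  proof (rule const_on_S)
    fix z assume zS: "z \<in> S"
    have bS: "\<beta> - z \<in> S" using zS S_reflect by simp
    have "((\<lambda>w. \<beta> - w) has_field_derivative -1) (at z)"
      by (auto intro!: derivative_eq_intros)
    hence "((\<lambda>w. F (\<beta> - w)) has_field_derivative g (\<beta> - z) * -1) (at z)"
      using DERIV_chain2[of F "g (\<beta> - z)" "\<lambda>w. \<beta> - w" z "-1" UNIV] F[OF bS] by simp
    hence "((\<lambda>w. F (\<beta> - w) - F w) has_field_derivative g (\<beta> - z) * -1 - g z) (at z)"
      by (intro DERIV_diff F zS)
    thus "((\<lambda>w. F (\<beta> - w) - F w) has_field_derivative 0) (at z)" using g_reflect[of z] by simp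
  qed
  then obtain K where K: "\<And>z. z \<in> S \<Longrightarrow> F (\<beta> - z) - F z = K" by blast
  have K0: "K = 0"
  proof -
    have bz: "\<beta> - z0 \<in> S" using z0S S_reflect by simp
    have "F (\<beta> - z0) - F z0 = K" using K[OF z0S] .
    moreover have "F (\<beta> - (\<beta> - z0)) - F (\<beta> - z0) = K" using K[OF bz] .
    ultimately have h1: "F (\<beta> - z0) - F z0 = K" and h2: "F z0 - F (\<beta> - z0) = K" by simp_all
    have "2 * K = (F (\<beta> - z0) - F z0) + (F z0 - F (\<beta> - z0))" unfolding h1 h2 by simp
    also have "\<dots> = 0" by simp
    finally show ?thesis by simp
  qed
  have refl: "F (\<beta> - z) = F z" if "z \<in> S" for z using K[OF that] K0 by simp
  have "F (z + l) = F z" if lL: "l \<in> L" and zS: "z \<in> S" for l z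
  proof -
    obtain c where c: "\<And>z. z \<in> S \<Longrightarrow> F (z + l) = F z + c" using shift[OF lL] by blast
    have mlS: "z - l \<in> S" using S_shift[OF lL, of "z - l"] zS by simp
    have bS: "\<beta> - z \<in> S" using zS S_reflect by simp
    have e1: "F z = F (z - l) + c" using c[OF mlS] by simp
    have "F (z - l) = F (\<beta> - (z - l))" using refl[OF mlS] by simp
    also have "\<beta> - (z - l) = (\<beta> - z) + l" by simp
    also have "F ((\<beta> - z) + l) = F (\<beta> - z) + c" using c[OF bS] .
    also have "F (\<beta> - z) = F z" using refl[OF zS] .
    finally have e2: "F (z - l) = F z + c" .
    have "F z = F z + (c + c)" using e1 unfolding e2 by (simp add: add.assoc)
    hence "c + c = 0" by simp
    hence "c = 0" by simp
    thus ?thesis using c[OF zS] by simp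
  qed
  thus ?thesis using F by blast
qed

end

lemma riemann_bounded:
  assumes hol: "h holomorphic_on ball z r - {z}" and r: "r > 0"
    and bd: "\<And>w. w \<in> ball z r - {z} \<Longrightarrow> norm (h w) \<le> B"
  shows "\<exists>c. h \<midarrow>z\<rightarrow> c"
proof -
  define k where "k = (\<lambda>w. (w - z) * h w)"
  have khol: "k holomorphic_on ball z r - {z}" unfolding k_def by (intro holomorphic_intros hol)
  have ev: "eventually (\<lambda>w. w \<in> ball z r - {z}) (at z)"
    using r by (intro eventually_at_in_open) auto
  have "((\<lambda>w. norm (w - z) * B) \<longlongrightarrow> norm (z - z) * B) (at z)"
    by (intro tendsto_intros)
  hence lim0: "((\<lambda>w. norm (w - z) * B) \<longlongrightarrow> 0) (at z)" by simp
  have "k \<midarrow>z\<rightarrow> 0"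
  proof (rule Lim_null_comparison[OF _ lim0])
    show "\<forall>\<^sub>F x in at z. norm (k x) \<le> norm (x - z) * B"
      using ev by eventually_elim (auto simp: k_def norm_mult intro!: mult_left_mono bd)
  qed
  hence K1: "(\<lambda>y. if y = z then 0 else k y) holomorphic_on ball z r"
    by (intro removable_singularity[OF khol open_ball])
  define K where "K = (\<lambda>y. if y = z then 0 else k y)"
  have "(\<lambda>y. if y = z then deriv K z else (K y - K z) / (y - z)) holomorphic_on ball z r"
    using pole_lemma_open[OF K1[folded K_def] open_ball] by blast
  hence "continuous_on (ball z r) (\<lambda>y. if y = z then deriv K z else (K y - K z) / (y - z))"
    by (rule holomorphic_on_imp_continuous_on)
  hence "isCont (\<lambda>y. if y = z then deriv K z else (K y - K z) / (y - z)) z"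
    using r by (simp add: continuous_on_eq_continuous_at)
  hence lim: "(\<lambda>y. if y = z then deriv K z else (K y - K z) / (y - z)) \<midarrow>z\<rightarrow> deriv K z"
    by (simp add: isCont_def)
  have "h \<midarrow>z\<rightarrow> deriv K z"
  proof (rule tendsto_cong[THEN iffD1, OF _ lim])
    show "\<forall>\<^sub>F x in at z. (if x = z then deriv K z else (K x - K z) / (x - z)) = h x"
      using ev by eventually_elim (auto simp: K_def k_def)
  qed
  thus ?thesis by blast
qed

context ellsym begin

lemma local_data:
  "\<exists>r G M c. r > 0 \<and> M > 0 \<and> c > 0 \<and> (\<forall>w\<in>cball z r. c \<le> norm (G w) \<and> norm (G w) \<le> M)
     \<and> G holomorphic_on cball z r
     \<and> (\<forall>w\<in>cball z r - {z}. w \<in> S \<and> g w = G w * (w - z) powi (zorder f z) \<and> g w \<noteq> 0)"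
proof -
  define n where "n = zorder f z"
  define G where "G = zor_poly f z"
  obtain r where r: "r > 0" "G holomorphic_on cball z r"
      "\<And>w. w \<in> cball z r - {z} \<Longrightarrow> f w = G w * (w - z) powi n \<and> G w \<noteq> 0" and Gz: "G z \<noteq> 0"
    using zorder_exist[OF isol ness nz, of z] unfolding n_def G_def by blast
  have Gc: "continuous_on (cball z r) G" using r(2) holomorphic_on_imp_continuous_on by blast
  have "bounded (G ` cball z r)" using Gc by (intro compact_imp_bounded compact_continuous_image) auto
  then obtain M where M: "M > 0" "\<And>w. w \<in> cball z r \<Longrightarrow> norm (G w) \<le> M"
    unfolding bounded_pos by blast
  have "continuous_on (cball z r) (\<lambda>w. norm (G w))" using Gc by (intro continuous_intros)
  then obtain x where x: "x \<in> cball z r" "\<And>y. y \<in> cball z r \<Longrightarrow> norm (G x) \<le> norm (G y)"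
    using continuous_attains_inf[of "cball z r" "\<lambda>w. norm (G w)"] r(1) by auto
  have "G x \<noteq> 0" using r(3)[of x] Gz x(1) by (cases "x = z") auto
  hence c: "norm (G x) > 0" by simp
  have fhol: "f holomorphic_on ball z r - {z}"
  proof (rule holomorphic_transform)
    show "(\<lambda>w. G w * (w - z) powi n) holomorphic_on ball z r - {z}"
      by (intro holomorphic_intros holomorphic_on_subset[OF r(2)]) auto
    show "\<And>w. w \<in> ball z r - {z} \<Longrightarrow> G w * (w - z) powi n = f w" using r(3) by auto
  qed
  have gw: "w \<in> S \<and> g w = G w * (w - z) powi n \<and> g w \<noteq> 0" if w: "w \<in> ball z r - {z}" for w
  proof -
    have "f analytic_on {w}"
      using fhol w analytic_on_open[of "ball z r - {z}" f] analytic_on_subset by blast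
    hence "g w = f w" "w \<in> S" unfolding g_def S_def
      using analytic_at_imp_no_pole by auto
    thus ?thesis using r(3)[of w] w by auto
  qed
  show ?thesis
  proof (intro exI conjI)
    show "r / 2 > 0" "M > 0" "norm (G x) > 0" using r(1) M(1) c by auto
    show "\<forall>w\<in>cball z (r/2). norm (G x) \<le> norm (G w) \<and> norm (G w) \<le> M"
      using x(2) M(2) r(1) by auto
    show "G holomorphic_on cball z (r/2)" by (rule holomorphic_on_subset[OF r(2)]) (use r(1) in auto)
    show "\<forall>w\<in>cball z (r/2) - {z}. w \<in> S \<and> g w = G w * (w - z) powi zorder f z \<and> g w \<noteq> 0"
    proof
      fix w assume w: "w \<in> cball z (r/2) - {z}"
      hence "w \<in> ball z r - {z}" using r(1) by auto
      thus "w \<in> S \<and> g w = G w * (w - z) powi zorder f z \<and> g w \<noteq> 0" using gw unfolding n_def by blast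
    qed
  qed
qed

end

context ellsym begin

lemma zorder_nonneg_S: "zorder f z \<ge> 0 \<Longrightarrow> z \<in> S"
  using isolated_pole_imp_neg_zorder[OF isol] unfolding S_def by force

lemma local_nonneg:
  assumes Fd: "\<And>z. z \<in> S \<Longrightarrow> (F has_field_derivative g z) (at z)"
    and Fper: "\<And>l z. l \<in> L \<Longrightarrow> z \<in> S \<Longrightarrow> F (z + l) = F z"
    and n0: "zorder f z \<ge> 0"
  shows "\<exists>r>0. \<exists>B K. \<forall>w\<in>ball z r - {z}. norm ((F w - F z0) / g w) \<le> B \<and>
           (0 < zorder f z \<longrightarrow> norm ((F w - F z0) / g w) \<le> K * norm (w - z))"
proof -
  obtain r G M c where r: "r > 0" and M: "M > 0" and c: "c > 0"
    and bds: "\<And>w. w \<in> cball z r \<Longrightarrow> c \<le> norm (G w) \<and> norm (G w) \<le> M"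
    and Ghol: "G holomorphic_on cball z r"
    and gw: "\<And>w. w \<in> cball z r - {z} \<Longrightarrow> w \<in> S \<and> g w = G w * (w - z) powi (zorder f z) \<and> g w \<noteq> 0"
    using local_data[of z] by blast
  define k where "k = nat (zorder f z)"
  have pk: "u powi (zorder f z) = u ^ k" for u :: complex
    using n0 by (simp add: power_int_def k_def)
  have zS: "z \<in> S" using zorder_nonneg_S[OF n0] .
  have gw': "g u = G u * (u - z) ^ k" if "u \<in> ball z r" for u
  proof (cases "u = z")
    case False thus ?thesis using gw[of u] that pk by auto
  next
    case True
    have "isCont g z" using g_hol S_open zS by (meson holomorphic_on_imp_continuous_on continuous_on_eq_continuous_at)
    hence l1: "g \<midarrow>z\<rightarrow> g z" by (simp add: isCont_def)
    have "isCont G z" using Ghol r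
      by (meson holomorphic_on_imp_continuous_on continuous_on_subset ball_subset_cball
                continuous_on_eq_continuous_at open_ball centre_in_ball)
    hence "(\<lambda>u. G u * (u - z) ^ k) \<midarrow>z\<rightarrow> G z * (z - z) ^ k"
      by (intro tendsto_intros) (simp_all add: isCont_def)
    moreover have "eventually (\<lambda>u. G u * (u - z) ^ k = g u) (at z)"
    proof -
      have "eventually (\<lambda>u. u \<in> ball z r - {z}) (at z)" using r by (intro eventually_at_in_open) auto
      thus ?thesis by eventually_elim (use gw pk in auto)
    qed
    ultimately have "g \<midarrow>z\<rightarrow> G z * (z - z) ^ k" by (rule tendsto_cong[THEN iffD1, rotated])
    with l1 have "g z = G z * (z - z) ^ k" using LIM_unique by blast
    thus ?thesis using True by simp
  qed
  have ballS: "ball z r \<subseteq> S"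
  proof
    fix x assume "x \<in> ball z r"
    thus "x \<in> S" using gw[of x] zS by (cases "x = z") auto
  qed
  define B where "B = (M * r + norm (F z - F z0)) / c"
  define K where "K = M / c"
  have main: "norm ((F w - F z0) / g w) \<le> B \<and> (0 < zorder f z \<longrightarrow> norm ((F w - F z0) / g w) \<le> K * norm (w - z))"
    if w: "w \<in> ball z r - {z}" for w
  proof -
    define \<rho> where "\<rho> = norm (w - z)"
    have \<rho>: "\<rho> > 0" "\<rho> < r" using w by (auto simp: \<rho>_def dist_norm norm_minus_commute)
    have seg: "closed_segment z w \<subseteq> ball z r" using w r by (intro closed_segment_subset convex_ball) auto
    have "norm (F w - F z) \<le> (M * \<rho> ^ k) * norm (w - z)"
    proof (rule field_differentiable_bound[OF convex_closed_segment])
      fix u assume u: "u \<in> closed_segment z w"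
      hence uS: "u \<in> S" using seg ballS by blast
      show "(F has_field_derivative g u) (at u within closed_segment z w)"
        using Fd[OF uS] by (rule has_field_derivative_at_within)
      have "norm (u - z) \<le> \<rho>" using segment_bound1[OF u] by (simp add: \<rho>_def)
      hence "norm (u - z) ^ k \<le> \<rho> ^ k" by (intro power_mono) auto
      moreover have "norm (G u) \<le> M" using bds[of u] u seg by auto
      ultimately have "norm (G u) * norm (u - z) ^ k \<le> M * \<rho> ^ k"
        using M by (intro mult_mono) auto
      thus "norm (g u) \<le> M * \<rho> ^ k" using gw'[of u] u seg by (auto simp: norm_mult norm_power)
    qed auto
    hence Fb: "norm (F w - F z) \<le> M * \<rho> ^ k * \<rho>" by (simp add: \<rho>_def)
    have gb: "c * \<rho> ^ k \<le> norm (g w)"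
    proof -
      have "c \<le> norm (G w)" using bds[of w] w by auto
      hence "c * \<rho> ^ k \<le> norm (G w) * \<rho> ^ k" using \<rho> by (intro mult_right_mono) auto
      thus ?thesis using gw'[of w] w by (simp add: norm_mult norm_power \<rho>_def)
    qed
    have gpos: "c * \<rho> ^ k > 0" using c \<rho> by simp
    have nd: "norm ((F w - F z0) / g w) = norm (F w - F z0) / norm (g w)" by (simp add: norm_divide)
    show ?thesis
    proof (cases "k = 0")
      case True
      have "norm (F w - F z0) \<le> norm (F w - F z) + norm (F z - F z0)"
        using norm_triangle_ineq[of "F w - F z" "F z - F z0"] by simp
      also have "\<dots> \<le> M * r + norm (F z - F z0)"
      proof -
        have "M * \<rho> \<le> M * r" using \<rho> M by (intro mult_left_mono) auto
        thus ?thesis using Fb True by simp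
      qed
      finally have num: "norm (F w - F z0) \<le> M * r + norm (F z - F z0)" .
      have "norm (F w - F z0) / norm (g w) \<le> (M * r + norm (F z - F z0)) / c"
        using True gb c M r by (intro frac_le num) auto
      moreover have "\<not> 0 < zorder f z" using True n0 by (simp add: k_def)
      ultimately show ?thesis unfolding nd B_def by simp
    next
      case False
      have pos: "0 < zorder f z" using False n0 by (simp add: k_def)
      have "z - z0 \<in> L" using zeros[OF pos] .
      hence "F z = F z0" using Fper[of "z - z0" z0] z0S by simp
      hence num: "norm (F w - F z0) \<le> M * \<rho> ^ k * \<rho>" using Fb by simp
      have "norm (F w - F z0) / norm (g w) \<le> (M * \<rho> ^ k * \<rho>) / (c * \<rho> ^ k)"
        using gpos gb M \<rho> by (intro frac_le num) auto
      also have "\<dots> = K * \<rho>" using \<rho> c by (simp add: K_def field_simps)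
      finally have h1: "norm (F w - F z0) / norm (g w) \<le> K * \<rho>" .
      have "K * \<rho> \<le> K * r" using \<rho> M c by (intro mult_left_mono) (auto simp: K_def)
      also have "K * r \<le> B" unfolding K_def B_def using c by (simp add: field_simps)
      finally have "K * \<rho> \<le> B" .
      thus ?thesis using h1 unfolding nd \<rho>_def by auto
    qed
  qed
  show ?thesis using r main by blast
qed


lemma local_neg:
  assumes Fd: "\<And>z. z \<in> S \<Longrightarrow> (F has_field_derivative g z) (at z)"
    and nneg: "zorder f z < 0"
  shows "\<exists>r>0. \<exists>B. \<forall>w\<in>ball z r - {z}. norm ((F w - F z0) / g w) \<le> B"
proof -
  obtain r G M c where r: "r > 0" and M: "M > 0" and c: "c > 0"
    and bds: "\<And>w. w \<in> cball z r \<Longrightarrow> c \<le> norm (G w) \<and> norm (G w) \<le> M"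
    and gw: "\<And>w. w \<in> cball z r - {z} \<Longrightarrow> w \<in> S \<and> g w = G w * (w - z) powi (zorder f z) \<and> g w \<noteq> 0"
    using local_data[of z] by blast
  define k where "k = nat (- zorder f z)"
  have pk: "norm (u powi (zorder f z)) = 1 / norm u ^ k" for u :: complex
    using nneg by (simp add: power_int_def k_def norm_power norm_inverse power_inverse divide_inverse)
  have ng: "norm (g u) = norm (G u) / norm (u - z) ^ k" if "u \<in> cball z r - {z}" for u
    using gw[OF that] pk[of "u - z"] by (simp add: norm_mult)
  have sphS: "sphere z (r/2) \<subseteq> S" using gw r by auto
  have Fc: "continuous_on S F" using Fd by (meson DERIV_isCont continuous_at_imp_continuous_on)
  have "bounded (F ` sphere z (r/2))"
    by (intro compact_imp_bounded compact_continuous_image continuous_on_subset[OF Fc sphS]) auto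
  then obtain C0 where C0: "C0 > 0" "\<And>u. u \<in> sphere z (r/2) \<Longrightarrow> norm (F u) \<le> C0"
    unfolding bounded_pos by blast
  define B where "B = ((C0 + norm (F z0)) * (r/2) ^ k + M * r / 2) / c"
  have main: "norm ((F w - F z0) / g w) \<le> B" if w: "w \<in> ball z (r/2) - {z}" for w
  proof -
    define \<rho> where "\<rho> = norm (w - z)"
    have \<rho>: "\<rho> > 0" "\<rho> < r/2" using w by (auto simp: \<rho>_def dist_norm norm_minus_commute)
    define q where "q = r / (2 * \<rho>)"
    have q: "q > 1" using \<rho> by (simp add: q_def field_simps)
    define ws where "ws = z + of_real q * (w - z)"
    have qr: "q * \<rho> = r / 2" using \<rho> by (simp add: q_def)
    have ws_sph: "ws \<in> sphere z (r/2)"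
    proof -
      have "ws - z = of_real q * (w - z)" by (simp add: ws_def)
      hence "norm (ws - z) = q * \<rho>" using q by (simp add: norm_mult \<rho>_def)
      thus ?thesis using qr by (simp add: dist_norm norm_minus_commute)
    qed
    have seg: "u \<in> cball z r - {z} \<and> \<rho> \<le> norm (u - z)" if u: "u \<in> closed_segment w ws" for u
    proof -
      obtain t where t: "0 \<le> t" "t \<le> 1" "u = (1 - t) *\<^sub>R w + t *\<^sub>R ws"
        using u unfolding closed_segment_def by blast
      define lam where "lam = (1 - t) + t * q"
      have "t * 1 \<le> t * q" using t q by (intro mult_left_mono) auto
      hence l1: "1 \<le> lam" by (simp add: lam_def)
      have "(1 - t) * 1 \<le> (1 - t) * q" using t q by (intro mult_left_mono) auto
      hence l2: "lam \<le> q" by (simp add: lam_def algebra_simps)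
      have "u - z = of_real lam * (w - z)"
        by (simp add: t(3) ws_def lam_def scaleR_conv_of_real algebra_simps)
      hence "norm (u - z) = \<bar>lam\<bar> * \<rho>" by (simp only: norm_mult norm_of_real \<rho>_def)
      hence nu: "norm (u - z) = lam * \<rho>" using l1 by simp
      have "\<rho> \<le> norm (u - z)" using nu l1 \<rho> by simp
      moreover have "norm (u - z) \<le> q * \<rho>" using nu l2 \<rho> by (simp add: mult_right_mono)
      moreover have "q * \<rho> = r / 2" using \<rho> by (simp add: q_def)
      ultimately show ?thesis using \<rho> r by (auto simp: dist_norm norm_minus_commute)
    qed
    have "norm (F w - F ws) \<le> (M / \<rho> ^ k) * norm (w - ws)"
    proof (rule field_differentiable_bound[OF convex_closed_segment])
      fix u assume u: "u \<in> closed_segment w ws"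
      hence uS: "u \<in> S" using seg[OF u] gw by blast
      show "(F has_field_derivative g u) (at u within closed_segment w ws)"
        using Fd[OF uS] by (rule has_field_derivative_at_within)
      have "\<rho> ^ k \<le> norm (u - z) ^ k" using seg[OF u] \<rho> by (intro power_mono) auto
      moreover have "norm (G u) \<le> M" using bds[of u] seg[OF u] by auto
      ultimately have "norm (G u) / norm (u - z) ^ k \<le> M / \<rho> ^ k"
        using \<rho> M by (intro frac_le) auto
      thus "norm (g u) \<le> M / \<rho> ^ k" using ng seg[OF u] by simp
    qed auto
    moreover have "norm (w - ws) \<le> r / 2"
    proof -
      have "w - ws = of_real (1 - q) * (w - z)" by (simp add: ws_def algebra_simps)
      hence "norm (w - ws) = \<bar>1 - q\<bar> * \<rho>" by (simp only: norm_mult norm_of_real \<rho>_def)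
      hence "norm (w - ws) = (q - 1) * \<rho>" using q by simp
      also have "\<dots> \<le> q * \<rho>" using \<rho> by simp
      also have "q * \<rho> = r / 2" using \<rho> by (simp add: q_def)
      finally show ?thesis .
    qed
    ultimately have "norm (F w - F ws) \<le> (M / \<rho> ^ k) * (r / 2)"
      using M \<rho> by (meson order_trans mult_left_mono divide_nonneg_pos zero_less_power less_imp_le)
    moreover have "norm (F ws) \<le> C0" using C0(2)[OF ws_sph] .
    moreover have "norm (F w - F z0) \<le> norm (F w - F ws) + norm (F ws) + norm (F z0)"
      using norm_triangle_ineq4[of "F w" "F z0"] norm_triangle_ineq[of "F w - F ws" "F ws"] by simp
    ultimately have num: "norm (F w - F z0) \<le> C0 + norm (F z0) + (M / \<rho> ^ k) * (r / 2)" by simp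
    have wc: "w \<in> cball z r - {z}" using w r dist_nz by (auto simp: dist_commute)
    have den: "c / \<rho> ^ k \<le> norm (g w)"
      using ng[OF wc] bds[of w] wc \<rho> by (simp add: \<rho>_def divide_right_mono)
    have dpos: "c / \<rho> ^ k > 0" using c \<rho> by simp
    have "norm ((F w - F z0) / g w) = norm (F w - F z0) / norm (g w)" by (simp add: norm_divide)
    also have "\<dots> \<le> (C0 + norm (F z0) + (M / \<rho> ^ k) * (r / 2)) / (c / \<rho> ^ k)"
      using num den dpos C0 M r \<rho> by (intro frac_le) auto
    also have "\<dots> = ((C0 + norm (F z0)) * \<rho> ^ k + M * r / 2) / c"
      using \<rho> c by (simp add: field_simps)
    also have "\<dots> \<le> B"
    proof -
      have "\<rho> ^ k \<le> (r/2) ^ k" using \<rho> by (intro power_mono) auto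
      hence "(C0 + norm (F z0)) * \<rho> ^ k \<le> (C0 + norm (F z0)) * (r/2) ^ k"
        using C0 by (intro mult_left_mono) auto
      thus ?thesis unfolding B_def using c by (intro divide_right_mono) auto
    qed
    finally show ?thesis .
  qed
  have "\<forall>w\<in>ball z (r/2) - {z}. norm ((F w - F z0) / g w) \<le> B" using main by blast
  thus ?thesis using r by (intro exI[of _ "r/2"]) auto
qed

end

context ellsym begin

theorem contradiction: False
proof -
  obtain F where Fd: "\<And>z. z \<in> S \<Longrightarrow> (F has_field_derivative g z) (at z)"
    and Fper: "\<And>l z. l \<in> L \<Longrightarrow> z \<in> S \<Longrightarrow> F (z + l) = F z"
    using F_exists by blast
  define h where "h = (\<lambda>w. (F w - F z0) / g w)"
  have Fhol: "F holomorphic_on S"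
    using Fd S_open by (meson field_differentiable_def holomorphic_on_open)
  have h_local: "\<exists>r>0. \<exists>B. \<forall>w\<in>ball z r - {z}. w \<in> S \<and> g w \<noteq> 0 \<and> norm (h w) \<le> B" for z
  proof -
    obtain r1 B where r1: "r1 > 0" "\<And>w. w \<in> ball z r1 - {z} \<Longrightarrow> norm (h w) \<le> B"
    proof (cases "zorder f z \<ge> 0")
      case True
      then obtain r1 B K where "r1 > 0" "\<forall>w\<in>ball z r1 - {z}. norm (h w) \<le> B"
        using local_nonneg[OF Fd Fper True] unfolding h_def by blast
      thus ?thesis using that by blast
    next
      case False
      then obtain r1 B where "r1 > 0" "\<forall>w\<in>ball z r1 - {z}. norm (h w) \<le> B"
        using local_neg[OF Fd, of z] unfolding h_def by force
      thus ?thesis using that by blast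
    qed
    obtain r2 G M c where r2: "r2 > 0"
      and gw: "\<And>w. w \<in> cball z r2 - {z} \<Longrightarrow> w \<in> S \<and> g w = G w * (w - z) powi (zorder f z) \<and> g w \<noteq> 0"
      using local_data[of z] by blast
    have "\<forall>w\<in>ball z (min r1 r2) - {z}. w \<in> S \<and> g w \<noteq> 0 \<and> norm (h w) \<le> B"
    proof
      fix w assume w: "w \<in> ball z (min r1 r2) - {z}"
      hence "w \<in> cball z r2 - {z}" "w \<in> ball z r1 - {z}" by auto
      thus "w \<in> S \<and> g w \<noteq> 0 \<and> norm (h w) \<le> B" using gw r1(2) by blast
    qed
    moreover have "min r1 r2 > 0" using r1 r2 by simp
    ultimately show ?thesis by blast
  qed
  have hol_loc: "\<exists>r>0. h holomorphic_on ball z r - {z} \<and> (\<exists>c. h \<midarrow>z\<rightarrow> c)" for z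
  proof -
    obtain r B where r: "r > 0" "\<And>w. w \<in> ball z r - {z} \<Longrightarrow> w \<in> S \<and> g w \<noteq> 0 \<and> norm (h w) \<le> B"
      using h_local[of z] by blast
    have sub: "ball z r - {z} \<subseteq> S" using r by blast
    have "h holomorphic_on ball z r - {z}"
      unfolding h_def
      by (intro holomorphic_intros holomorphic_on_subset[OF Fhol sub] holomorphic_on_subset[OF g_hol sub])
         (use r in auto)
    moreover from riemann_bounded[OF this r(1)] r(2) have "\<exists>c. h \<midarrow>z\<rightarrow> c" by blast
    ultimately show ?thesis using r(1) by blast
  qed
  define H where "H = remove_sings h"
  have isoh: "isolated_singularity_at h z" for z
  proof -
    obtain r where "r > 0" "h holomorphic_on ball z r - {z}" using hol_loc[of z] by blast
    thus ?thesis unfolding isolated_singularity_at_def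
      by (intro exI[of _ r]) (auto simp: analytic_on_open open_delete)
  qed
  have Han: "H analytic_on {z}" for z
  proof -
    obtain c where "h \<midarrow>z\<rightarrow> c" using hol_loc[of z] by blast
    thus ?thesis unfolding H_def by (rule remove_sings_analytic_at[OF isoh])
  qed
  have Hhol: "H holomorphic_on UNIV"
    using Han analytic_on_analytic_at analytic_imp_holomorphic by blast
  have hper: "h (w + l) = h w" if lL: "l \<in> L" for l w
  proof (cases "w \<in> S")
    case True
    thus ?thesis using Fper[OF lL True] g_shift[OF lL] by (simp add: h_def)
  next
    case False
    hence "is_pole f w" "is_pole f (w + l)" using pole_shift[OF lL] by (auto simp: S_def)
    hence "g w = 0" "g (w + l) = 0" unfolding g_def by simp_all
    thus ?thesis by (simp add: h_def)
  qed
  have Hper: "H (z + l) = H z" if lL: "l \<in> L" for l z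
  proof -
    obtain c where c: "h \<midarrow>z\<rightarrow> c" using hol_loc[of z] by blast
    have "(h \<circ> (\<lambda>w. w + l)) \<midarrow>z\<rightarrow> c" using c hper[OF lL] by (simp add: comp_def)
    hence "filterlim h (nhds c) (filtermap (\<lambda>w. w + l) (at z))"
      by (simp add: filterlim_filtermap comp_def)
    hence "h \<midarrow>(z + l)\<rightarrow> c" by (simp only: filtermap_shift_at)
    hence "H (z + l) = c" unfolding H_def by (rule remove_sings_eqI)
    moreover have "H z = c" unfolding H_def using c by (rule remove_sings_eqI)
    ultimately show ?thesis by simp
  qed
  have "bounded (range H)"
    by (rule periodic_bounded) (use Hhol holomorphic_on_imp_continuous_on Hper in auto)
  then obtain C where C: "\<And>z. H z = C" using Liouville_theorem[OF Hhol] unfolding constant_on_def by blast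
  have z0nn: "zorder f z0 \<ge> 0" using z0pos by simp
  obtain r0 B0 K0 where r0: "r0 > 0"
    and bd0: "\<And>w. w \<in> ball z0 r0 - {z0} \<Longrightarrow> norm (h w) \<le> K0 * norm (w - z0)"
    using local_nonneg[OF Fd Fper z0nn] z0pos unfolding h_def by blast
  have "h \<midarrow>z0\<rightarrow> 0"
  proof (rule Lim_null_comparison)
    have "eventually (\<lambda>w. w \<in> ball z0 r0 - {z0}) (at z0)" using r0 by (intro eventually_at_in_open) auto
    thus "\<forall>\<^sub>F w in at z0. norm (h w) \<le> K0 * norm (w - z0)" by eventually_elim (rule bd0)
    have "((\<lambda>w. K0 * norm (w - z0)) \<longlongrightarrow> K0 * norm (z0 - z0)) (at z0)" by (intro tendsto_intros)
    thus "((\<lambda>w. K0 * norm (w - z0)) \<longlongrightarrow> 0) (at z0)" by simp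
  qed
  hence "H z0 = 0" unfolding H_def by (rule remove_sings_eqI)
  hence H0: "\<And>z. H z = 0" using C by metis
  obtain r B where r: "r > 0" "\<And>w. w \<in> ball z0 r - {z0} \<Longrightarrow> w \<in> S \<and> g w \<noteq> 0 \<and> norm (h w) \<le> B"
    using h_local[of z0] by blast
  obtain r' where r': "r' > 0" "h holomorphic_on ball z0 r' - {z0}" using hol_loc[of z0] by blast
  define U where "U = ball z0 (min r r') - {z0}"
  have Uopen: "open U" unfolding U_def by (simp add: open_delete)
  have FU: "F w = F z0" if wU: "w \<in> U" for w
  proof -
    have "h holomorphic_on U" unfolding U_def by (rule holomorphic_on_subset[OF r'(2)]) auto
    hence "h analytic_on {w}" using Uopen wU analytic_on_open analytic_on_subset by blast
    hence "H w = h w" unfolding H_def by simp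
    hence "h w = 0" using H0 by simp
    moreover have "g w \<noteq> 0" using r(2)[of w] wU by (auto simp: U_def)
    ultimately show ?thesis by (simp add: h_def)
  qed
  define w1 where "w1 = z0 + of_real (min r r' / 2)"
  have w1U: "w1 \<in> U" using r r' by (auto simp: U_def w1_def dist_norm)
  have w1S: "w1 \<in> S" and gw1: "g w1 \<noteq> 0" using r(2)[of w1] w1U by (auto simp: U_def)
  have "((\<lambda>_. F z0) has_field_derivative 0) (at w1)" by simp
  hence "(F has_field_derivative 0) (at w1)"
    by (rule has_field_derivative_transform_within_open[OF _ Uopen w1U]) (use FU in auto)
  with Fd[OF w1S] have "g w1 = 0" by (rule DERIV_unique)
  with gw1 show False by simp
qed

end

lemma affine_filterlim:
  fixes \<alpha> \<beta> z :: complex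
  assumes "\<alpha> \<noteq> 0"
  shows "filterlim (\<lambda>w. \<alpha> * w + \<beta>) (at (\<alpha> * z + \<beta>)) (at z)"
proof (rule filterlim_atI)
  show "((\<lambda>w. \<alpha> * w + \<beta>) \<longlongrightarrow> \<alpha> * z + \<beta>) (at z)" by (intro tendsto_intros)
  have "eventually (\<lambda>w. w \<noteq> z) (at z)" by (simp add: eventually_at_filter)
  thus "eventually (\<lambda>w. \<alpha> * w + \<beta> \<noteq> \<alpha> * z + \<beta>) (at z)"
    by eventually_elim (use assms in auto)
qed

lemma ev_transport:
  fixes \<alpha> \<beta> z :: complex
  assumes "\<alpha> \<noteq> 0" "eventually P (at (\<alpha> * z + \<beta>))"
  shows "eventually (\<lambda>w. P (\<alpha> * w + \<beta>)) (at z)"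
  using eventually_compose_filterlim[OF assms(2) affine_filterlim[OF assms(1)]] .

lemma shift_ev:
  fixes z :: complex
  assumes "eventually P (at z)"
  shows "eventually (\<lambda>u. P (u + z)) (at 0)"
  using ev_transport[where \<alpha>=1 and \<beta>=z and z=0 and P=P] assms by simp

lemma zorder_affine:
  fixes \<alpha> \<beta> z :: complex
  assumes mero: "f meromorphic_on UNIV" and a: "\<alpha> \<noteq> 0"
  shows "zorder (\<lambda>w. f (\<alpha> * w + \<beta>)) z = zorder f (\<alpha> * z + \<beta>)"
proof -
  define f1 where "f1 = (\<lambda>u. f (u + \<beta>))"
  have "f1 meromorphic_on {\<alpha> * z}"
    unfolding f1_def by (rule meromorphic_on_compose[OF mero]) (auto intro!: analytic_intros)
  from zorder_scale[OF this a] have "zorder (\<lambda>w. f1 (\<alpha> * w)) z = zorder f1 (\<alpha> * z)" .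
  also have "zorder f1 (\<alpha> * z) = zorder (\<lambda>u. f1 (u + \<alpha> * z)) 0" by (rule zorder_shift)
  also have "\<dots> = zorder (\<lambda>u. f (u + (\<alpha> * z + \<beta>))) 0" by (simp add: f1_def add.assoc add.commute add.left_commute)
  also have "\<dots> = zorder f (\<alpha> * z + \<beta>)" by (rule zorder_shift[symmetric])
  finally show ?thesis by (simp add: f1_def)
qed

lemma zorder_per:
  fixes l z :: complex
  assumes "eventually (\<lambda>w. f (w + l) = f w) (at z)"
  shows "zorder f (z + l) = zorder f z"
proof -
  have "zorder f (z + l) = zorder (\<lambda>u. f (u + (z + l))) 0" by (rule zorder_shift)
  also have "\<dots> = zorder (\<lambda>u. f (u + z)) 0"
    by (rule zorder_cong) (use shift_ev[OF assms] in \<open>auto simp: add.assoc add.commute add.left_commute\<close>)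
  also have "\<dots> = zorder f z" by (rule zorder_shift[symmetric])
  finally show ?thesis .
qed

lemma residue_per:
  fixes l z :: complex
  assumes "eventually (\<lambda>w. f (w + l) = f w) (at z)"
  shows "residue f (z + l) = residue f z"
proof -
  have "residue f (z + l) = residue (\<lambda>x. f (z + l + x)) 0" by (rule residue_shift_0)
  also have "\<dots> = residue (\<lambda>x. f (z + x)) 0"
    by (rule residue_cong) (use shift_ev[OF assms] in \<open>auto simp: add.assoc add.commute add.left_commute\<close>)
  also have "\<dots> = residue f z" by (rule residue_shift_0[symmetric])
  finally show ?thesis .
qed

theorem proposition2p8:
  fixes w1 w2 :: complex and f :: "complex \<Rightarrow> complex"
    and p :: nat and a :: nat and b :: "nat \<Rightarrow> nat"
    and z0 :: complex and q :: "nat \<Rightarrow> complex" and s :: "complex \<Rightarrow> complex"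
  defines "L \<equiv> lattice w1 w2"
  assumes lattice_nondeg: "Im (w2 / w1) \<noteq> 0"
    and p_pos: "p \<ge> 1"
    and b_ge2: "\<forall>j<p. b j \<ge> 2"
    and a_def: "a = (\<Sum>j<p. b j)"
    and form: "lattice_periodic_meromorphic L f"
    and nonzero: "\<exists>\<^sub>F w in at z0. f w \<noteq> 0"
    and zero: "zorder f z0 = int a"
    and poles: "\<forall>j<p. zorder f (q j) = - int (b j)"
    and residues: "\<forall>j<p. residue f (q j) = 0"
    and poles_distinct: "\<forall>i<p. \<forall>j<p. lat_cong L (q i) (q j) \<longrightarrow> i = j"
    and no_other_zeros: "\<forall>z. zorder f z > 0 \<longrightarrow> lat_cong L z z0"
    and no_other_poles: "\<forall>z. zorder f z < 0 \<longrightarrow> (\<exists>j<p. lat_cong L z (q j))"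
    and aut: "torus_automorphism_lift L s"
    and fixes_poles: "\<forall>j<p. lat_cong L (s (q j)) (q j)"
    and proj_invariant: "\<exists>c. pullback_eq s f c"
    and nontrivial: "\<exists>z. \<not> lat_cong L (s z) z"
  shows "(pullback_eq s f (-1) \<and> (\<forall>z. lat_cong L ((s ^^ 2) z) z))
       \<or> ((\<forall>z. lat_cong L ((s ^^ 3) z) z) \<and> p \<in> {1, 2})
       \<or> ((\<forall>z. lat_cong L ((s ^^ 4) z) z) \<and> p = 1)"
proof -
  interpret lat w1 w2 by unfold_locales (rule lattice_nondeg)
  have LL: "L = lattice w1 w2" by (simp add: L_def)
  have mero: "f meromorphic_on UNIV" and per: "\<And>l z. l \<in> L \<Longrightarrow> eventually (\<lambda>w. f (w + l) = f w) (at z)"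
    using form unfolding lattice_periodic_meromorphic_def by auto
  obtain \<alpha> \<beta> where anz: "\<alpha> \<noteq> 0" and seq: "s = (\<lambda>z. \<alpha> * z + \<beta>)"
    and aL: "\<forall>l\<in>L. \<alpha> * l \<in> L" and aiL: "\<forall>l\<in>L. l / \<alpha> \<in> L"
    using affine_lift[OF aut[unfolded LL]] LL by blast
  have ds: "deriv s w = \<alpha>" for w unfolding seq by simp
  obtain c where pb: "\<And>z. eventually (\<lambda>w. f (\<alpha> * w + \<beta>) * \<alpha> = c * f w) (at z)"
    using proj_invariant unfolding pullback_eq_def ds by (auto simp: seq)
  have nz: "frequently (\<lambda>w. f w \<noteq> 0) (at z)" for z
  proof -
    have "eventually (\<lambda>z. f z = 0) (cosparse UNIV) \<or> eventually (\<lambda>z. f z \<noteq> 0) (cosparse UNIV)"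
      by (rule meromorphic_imp_constant_or_avoid[OF mero]) auto
    moreover have "\<not> eventually (\<lambda>z. f z = 0) (cosparse UNIV)"
    proof
      assume "eventually (\<lambda>z. f z = 0) (cosparse UNIV)"
      hence "eventually (\<lambda>z. f z = 0) (at z0)" by (rule eventually_cosparse_imp_eventually_at) auto
      thus False using nonzero by (simp add: frequently_def)
    qed
    ultimately have "eventually (\<lambda>z. f z \<noteq> 0) (cosparse UNIV)" by blast
    hence "eventually (\<lambda>w. f w \<noteq> 0) (at z)" by (rule eventually_cosparse_imp_eventually_at) auto
    thus ?thesis by (simp add: eventually_frequently)
  qed
  have cnz: "c \<noteq> 0"
  proof
    assume c0: "c = 0"
    define z1 where "z1 = (z0 - \<beta>) / \<alpha>"
    have z1: "\<alpha> * z1 + \<beta> = z0" using anz by (simp add: z1_def)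
    have "eventually (\<lambda>w. f (\<alpha> * w + \<beta>) = 0) (at z1)"
      using pb[of z1] anz c0 by (auto elim: eventually_mono)
    hence "eventually (\<lambda>y. f (\<alpha> * ((1/\<alpha>) * y + (- \<beta> / \<alpha>)) + \<beta>) = 0) (at z0)"
      using ev_transport[where \<alpha>="1/\<alpha>" and \<beta>="- \<beta> / \<alpha>" and z=z0 and P="\<lambda>w. f (\<alpha> * w + \<beta>) = 0"] anz z1
      by (simp add: z1_def field_simps)
    hence "eventually (\<lambda>y. f y = 0) (at z0)" using anz by (simp add: field_simps)
    thus False using nonzero by (simp add: frequently_def)
  qed
  have apos: "a > 0"
  proof -
    have "b 0 \<le> (\<Sum>j<p. b j)" using p_pos by (intro member_le_sum) auto
    thus ?thesis using b_ge2 p_pos a_def by fastforce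
  qed
  have z0q: "q j - z0 \<notin> L" if "j < p" for j
  proof
    assume l: "q j - z0 \<in> L"
    have "zorder f (z0 + (q j - z0)) = zorder f z0" by (rule zorder_per[OF per[OF l]])
    hence "zorder f (q j) = int a" using zero by simp
    thus False using poles that apos by force
  qed
  have qq: "q i - q j \<notin> L" if "i < p" "j < p" "i \<noteq> j" for i j
    using poles_distinct that unfolding lat_cong_def by blast
  have z0fix: "s z0 - z0 \<in> L"
  proof -
    have "zorder (\<lambda>w. f (\<alpha> * w + \<beta>)) z0 = zorder (\<lambda>w. (c / \<alpha>) * f w) z0"
      by (rule zorder_cong) (use pb[of z0] anz in \<open>auto elim!: eventually_mono simp: field_simps\<close>)
    also have "\<dots> = zorder f z0" using cnz anz by (intro zorder_cmult) simp
    finally have "zorder f (s z0) = zorder f z0" using zorder_affine[OF mero anz] seq by simp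
    hence "zorder f (s z0) > 0" using zero apos by simp
    thus ?thesis using no_other_zeros unfolding lat_cong_def by blast
  qed
  have qfix: "s (q j) - q j \<in> L" if "j < p" for j using fixes_poles that unfolding lat_cong_def by blast
  have fixdiff: "(1 - \<alpha>) * (y - x) \<in> L" if "s x - x \<in> L" "s y - y \<in> L" for x y
  proof -
    have "(s x - x) - (s y - y) \<in> L" using that LL lattice_diff by blast
    moreover have "(s x - x) - (s y - y) = (1 - \<alpha>) * (y - x)" by (simp add: seq algebra_simps)
    ultimately show ?thesis by simp
  qed
  have aL': "\<forall>l\<in>lattice w1 w2. \<alpha> * l \<in> lattice w1 w2" using aL LL by simp
  have aiL': "\<forall>l\<in>lattice w1 w2. l / \<alpha> \<in> lattice w1 w2" using aiL LL by simp
  have s2: "(s ^^ 2) z = s (s z)" for z by (simp add: eval_nat_numeral)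
  have s3: "(s ^^ 3) z = s (s (s z))" for z by (simp add: eval_nat_numeral)
  have s4: "(s ^^ 4) z = s (s (s (s z)))" for z by (simp add: eval_nat_numeral)
  have isol: "isolated_singularity_at f z" for z
    using mero meromorphic_on_subset meromorphic_on_isolated_singularity by blast
  have ness: "not_essential f z" for z
    using mero meromorphic_on_subset meromorphic_on_not_essential by blast
  have res0: "residue f z = 0" for z
  proof (cases "is_pole f z")
    case True
    hence "zorder f z < 0" by (rule isolated_pole_imp_neg_zorder[OF isol])
    then obtain j where j: "j < p" "z - q j \<in> L" using no_other_poles unfolding lat_cong_def by blast
    have "residue f (q j + (z - q j)) = residue f (q j)" by (rule residue_per[OF per[OF j(2)]])
    thus ?thesis using residues j(1) by simp
  next
    case False
    then obtain c' where "f \<midarrow>z\<rightarrow> c'" using ness[of z] unfolding not_essential_def by blast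
    hence "remove_sings f analytic_on {z}" by (rule remove_sings_analytic_at[OF isol])
    then obtain A where A: "open A" "z \<in> A" "remove_sings f holomorphic_on A"
      unfolding analytic_at by blast
    have "residue (remove_sings f) z = 0" by (rule residue_holo[OF A])
    thus ?thesis using residue_remove_sings[OF isol] by simp
  qed
  from alpha_cases[OF anz aL' aiL'] show ?thesis
  proof (elim disjE exE conjE)
    assume a1: "\<alpha> = 1"
    have "\<beta> \<in> L" using qfix[of 0] p_pos by (simp add: seq a1)
    hence "lat_cong L (s z) z" for z by (simp add: lat_cong_def seq a1)
    thus ?thesis using nontrivial by blast
  next
    assume am1: "\<alpha> = -1"
    have ssz: "s (s z) = z" for z by (simp add: seq am1)
    have pb1: "eventually (\<lambda>w. f (- w + \<beta>) * (-1) = c * f w) (at z)" for z using pb[of z] am1 by simp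
    have "eventually (\<lambda>w. f (- (- w + \<beta>) + \<beta>) * (-1) = c * f (- w + \<beta>)) (at z0)"
      using ev_transport[where \<alpha>="-1" and \<beta>=\<beta> and z=z0 and P="\<lambda>y. f (- y + \<beta>) * (-1) = c * f y"] pb1 by simp
    hence "eventually (\<lambda>w. f w * (-1) = c * f (- w + \<beta>)) (at z0)" by simp
    with pb1[of z0] have "eventually (\<lambda>w. f w = c\<^sup>2 * f w) (at z0)"
    proof eventually_elim
      case (elim w)
      have e1: "f (- w + \<beta>) = - (c * f w)" using elim(1) by (simp add: minus_equation_iff)
      have "- f w = c * f (- w + \<beta>)" using elim(2) by simp
      also have "\<dots> = - (c\<^sup>2 * f w)" unfolding e1 by (simp add: power2_eq_square)
      finally show ?case by simp
    qed
    from frequently_eventually_frequently[OF nz[of z0] this]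
    have "frequently (\<lambda>w. f w \<noteq> 0 \<and> f w = c\<^sup>2 * f w) (at z0)" .
    then obtain w where "f w \<noteq> 0" "f w = c\<^sup>2 * f w" using frequently_ex by blast
    hence "c\<^sup>2 = 1" by (metis mult_cancel_right1)
    hence "c = 1 \<or> c = -1" by (simp add: power2_eq_1_iff)
    thus ?thesis
    proof
      assume c1: "c = 1"
      interpret E: ellsym w1 w2 f \<beta> z0
      proof unfold_locales
        show "f meromorphic_on UNIV" by (rule mero)
        show "\<And>l z. l \<in> lattice w1 w2 \<Longrightarrow> eventually (\<lambda>w. f (w + l) = f w) (at z)" using per LL by simp
        show "\<And>z. frequently (\<lambda>w. f w \<noteq> 0) (at z)" by (rule nz)
        show "\<And>z. residue f z = 0" by (rule res0)
        show "\<And>z. 0 < zorder f z \<Longrightarrow> z - z0 \<in> lattice w1 w2"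
          using no_other_zeros LL unfolding lat_cong_def by simp
        show "0 < zorder f z0" using zero apos by simp
        show "eventually (\<lambda>w. f (\<beta> - w) = - f w) (at z)" for z
          using pb1[of z] c1 by (auto elim!: eventually_mono simp: minus_equation_iff)
      qed
      show ?thesis using E.contradiction by blast
    next
      assume c1: "c = -1"
      have "pullback_eq s f (-1)"
        unfolding pullback_eq_def ds using pb c1 by (simp add: seq)
      moreover have "\<forall>z. lat_cong L ((s ^^ 2) z) z" by (simp add: s2 ssz LL)
      ultimately show ?thesis by blast
    qed
  next
    fix ma mb mc md :: int
    assume M1: "\<alpha> * w1 = of_int ma * w1 + of_int mb * w2" and M2: "\<alpha> * w2 = of_int mc * w1 + of_int md * w2"
      and det: "ma * md - mb * mc = 1" and tr: "ma + md \<in> {-1, 0, 1}"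
      and sq: "\<alpha>\<^sup>2 = of_int (ma + md) * \<alpha> - 1"
    define t where "t = ma + md"
    have an1: "\<alpha> \<noteq> 1"
    proof
      assume "\<alpha> = 1"
      hence "(1::complex) = of_int t - 1" using sq by (simp add: t_def)
      hence "of_int t = (2::complex)" by (simp add: algebra_simps)
      hence "t = 2" by (metis of_int_eq_numeral_iff)
      thus False using tr by (simp add: t_def)
    qed
    have detB: "(1 - ma) * (1 - md) - (- mb) * (- mc) = 2 - t"
      using det by (simp add: t_def algebra_simps)
    have noB: "\<not> inB (1 - ma) (- mb) (- mc) (1 - md) m k"
      if e: "(1 - \<alpha>) * d = of_int m * w1 + of_int k * w2" and dL: "d \<notin> L" for d m k
    proof
      assume "inB (1 - ma) (- mb) (- mc) (1 - md) m k"
      then obtain u1 u2 where u: "m = (1 - ma) * u1 + (- mc) * u2" "k = (- mb) * u1 + (1 - md) * u2"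
        unfolding inB_def by blast
      have "(1 - \<alpha>) * (of_int u1 * w1 + of_int u2 * w2) = of_int u1 * w1 + of_int u2 * w2 - of_int u1 * (\<alpha> * w1) - of_int u2 * (\<alpha> * w2)"
        by (simp add: algebra_simps)
      also have "\<dots> = of_int m * w1 + of_int k * w2"
        unfolding M1 M2 u by (simp add: algebra_simps)
      finally have "(1 - \<alpha>) * d = (1 - \<alpha>) * (of_int u1 * w1 + of_int u2 * w2)" using e by simp
      hence "d = of_int u1 * w1 + of_int u2 * w2" using an1 by simp
      hence "d \<in> L" using LL lattice_comb by simp
      thus False using dL by simp
    qed
    have coords: "\<exists>m k. (1 - \<alpha>) * (q j - z0) = of_int m * w1 + of_int k * w2" if "j < p" for j
    proof -
      have "(1 - \<alpha>) * (q j - z0) \<in> lattice w1 w2" using fixdiff[OF z0fix qfix[OF that]] LL by simp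
      thus ?thesis unfolding lattice_iff by blast
    qed
    have diffc: "(1 - \<alpha>) * (q i - q j) = of_int (m1 - m2) * w1 + of_int (k1 - k2) * w2"
      if "(1 - \<alpha>) * (q i - z0) = of_int m1 * w1 + of_int k1 * w2"
         "(1 - \<alpha>) * (q j - z0) = of_int m2 * w1 + of_int k2 * w2" for i j m1 k1 m2 k2
    proof -
      have "(1 - \<alpha>) * (q i - q j) = (1 - \<alpha>) * (q i - z0) - (1 - \<alpha>) * (q j - z0)" by (simp add: algebra_simps)
      also have "\<dots> = of_int (m1 - m2) * w1 + of_int (k1 - k2) * w2" unfolding that by (simp add: algebra_simps)
      finally show ?thesis .
    qed
    obtain m0 k0 where e0: "(1 - \<alpha>) * (q 0 - z0) = of_int m0 * w1 + of_int k0 * w2"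
      using coords[of 0] p_pos by auto
    have nb0: "\<not> inB (1 - ma) (- mb) (- mc) (1 - md) m0 k0" using noB[OF e0 z0q] p_pos by simp
    consider "t = -1" | "t = 0" | "t = 1" using tr by (auto simp: t_def)
    thus ?thesis
    proof cases
      case 3
      have "(1 - ma) * (1 - md) - (- mb) * (- mc) = 1" using detB 3 by simp
      from index1[OF this] nb0 show ?thesis by blast
    next
      case 2
      have "md = - ma" using 2 by (simp add: t_def)
      hence sq2: "\<alpha>\<^sup>2 = -1" using sq by simp
      have "s (s (s (s z))) = z" for z
      proof -
        have "s (s (s (s z))) = (\<alpha>\<^sup>2)\<^sup>2 * z + (\<alpha> * \<alpha>\<^sup>2 + \<alpha>\<^sup>2 + \<alpha> + 1) * \<beta>"
          by (simp add: seq power2_eq_square algebra_simps)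
        thus ?thesis using sq2 by simp
      qed
      hence fix4: "\<forall>z. lat_cong L ((s ^^ 4) z) z" by (simp add: s4 LL)
      have "p = 1"
      proof (rule ccontr)
        assume "p \<noteq> 1"
        hence p2: "1 < p" using p_pos by simp
        obtain m1 k1 where e1: "(1 - \<alpha>) * (q 1 - z0) = of_int m1 * w1 + of_int k1 * w2"
          using coords[of 1] p2 by auto
        have nb1: "\<not> inB (1 - ma) (- mb) (- mc) (1 - md) m1 k1" using noB[OF e1 z0q] p2 by simp
        have nb01: "\<not> inB (1 - ma) (- mb) (- mc) (1 - md) (m0 - m1) (k0 - k1)"
          using noB[OF diffc[OF e0 e1] qq[of 0 1]] p2 by simp
        have "(1 - ma) * (1 - md) - (- mb) * (- mc) = 2" using detB 2 by simp
        from index2[OF this nb0 nb1 nb01] show False .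
      qed
      thus ?thesis using fix4 by blast
    next
      case 1
      have "md = - 1 - ma" using 1 by (simp add: t_def)
      hence sq3: "\<alpha>\<^sup>2 = - \<alpha> - 1" using sq by simp
      have "s (s (s z)) = z" for z
      proof -
        have "s (s (s z)) = (\<alpha> * \<alpha>\<^sup>2) * z + (\<alpha>\<^sup>2 + \<alpha> + 1) * \<beta>"
          by (simp add: seq power2_eq_square algebra_simps)
        also have "\<alpha> * \<alpha>\<^sup>2 = 1"
        proof -
          have "\<alpha> * \<alpha>\<^sup>2 = \<alpha> * (- \<alpha> - 1)" using sq3 by simp
          also have "\<dots> = - (\<alpha>\<^sup>2) - \<alpha>" by (simp add: power2_eq_square algebra_simps)
          also have "\<dots> = 1" using sq3 by simp
          finally show ?thesis .
        qed
        finally show ?thesis using sq3 by simp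
      qed
      hence fix3: "\<forall>z. lat_cong L ((s ^^ 3) z) z" by (simp add: s3 LL)
      have "p \<le> 2"
      proof (rule ccontr)
        assume "\<not> p \<le> 2"
        hence p3: "2 < p" by simp
        obtain m1 k1 where e1: "(1 - \<alpha>) * (q 1 - z0) = of_int m1 * w1 + of_int k1 * w2"
          using coords[of 1] p3 by auto
        obtain m2 k2 where e2: "(1 - \<alpha>) * (q 2 - z0) = of_int m2 * w1 + of_int k2 * w2"
          using coords[of 2] p3 by auto
        have nb1: "\<not> inB (1 - ma) (- mb) (- mc) (1 - md) m1 k1" using noB[OF e1 z0q] p3 by simp
        have nb2: "\<not> inB (1 - ma) (- mb) (- mc) (1 - md) m2 k2" using noB[OF e2 z0q] p3 by simp
        have nb01: "\<not> inB (1 - ma) (- mb) (- mc) (1 - md) (m0 - m1) (k0 - k1)"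
          using noB[OF diffc[OF e0 e1] qq[of 0 1]] p3 by simp
        have nb02: "\<not> inB (1 - ma) (- mb) (- mc) (1 - md) (m0 - m2) (k0 - k2)"
          using noB[OF diffc[OF e0 e2] qq[of 0 2]] p3 by simp
        have nb12: "\<not> inB (1 - ma) (- mb) (- mc) (1 - md) (m1 - m2) (k1 - k2)"
          using noB[OF diffc[OF e1 e2] qq[of 1 2]] p3 by simp
        have "(1 - ma) * (1 - md) - (- mb) * (- mc) = 3" using detB 1 by simp
        from index3[OF this nb0 nb1 nb2 nb01 nb02 nb12] show False .
      qed
      hence "p \<in> {1, 2}" using p_pos by auto
      thus ?thesis using fix3 by blast
    qed
  qed
qed

end
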